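(* Let $A\in\Omega^1([0,1],\mathfrak g)$ (formal, i.e. treated as an infinitesimal/formal variable) and let $A_T$, $T\ge0$, be the solution of the flow equation $\partial_TA_T=-\mathrm{d}_{A_T}\kappa_{\mathcal A}(A_T)$ with $A_0=A$ (the flow $\Phi_T$ of $-H^{\mathrm{cl}}$ restricted to fields with $c=A^+=c^+=0$). Then $$\pi^{\mathrm{cl}}_{\mathrm{int}}(A)=\lim_{T\to\infty}\pi(\Phi_T(A))=-e_I\,\log P\exp\Big(-\int_0^1A\Big)\in C^1(I,\mathfrak g)\cong\mathfrak g,$$ i.e. $\lim_{T\to\infty}\int_0^1A_T=-\log P\exp(-\int_0^1A)$, while the other components ($c_0,c_1$ and the chain components) of $\pi^{\mathrm{cl}}_{\mathrm{int}}(A)$ vanish.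
   Context: 1d $BF$ theory on $I=[0,1]$ with unimodular Lie algebra $\mathfrak g$: fields $\mathcal A=c+A\in\Omega^\bullet(I,\mathfrak g)[1]$ ($c$ a 0-form of ghost number 1, $A$ a 1-form) and $\mathcal B=A^++c^+\in\Omega^\bullet_{\mathrm{distr}}(I,\mathfrak g^* )[-1]$; action $S=\int_I\langle\mathcal B,\mathrm{d}\mathcal A+\frac12[\mathcal A,\mathcal A]\rangle$. Infrared fields: cellular cochains $C^\bullet(I,\mathfrak g)[1]$ with basis $e_0,e_1,e_I$ and cellular chains $C_{-\bullet}(I,\mathfrak g^* )[-2]$ with basis $e^0,e^1,e^I$. Whitney–Dupont SDR: $\pi(c+A,A^++c^+)=\big(e_0c(0)+e_1c(1)+e_I\int_0^1A,\ e^0\int_0^1(1-t)c^++e^1\int_0^1tc^++e^I\int_0^1\mathrm{d}t\,A^+\big)$; chain homotopy on the $\mathcal A$-sector $\kappa_{\mathcal A}(c+A)(t)=\int_0^1(\theta(t-t')-t)A(t')$ (and dual one on the $\mathcal B$-sector). $\mathrm{d}_Af=\mathrm{d}f+[A,f]$. $H^{\mathrm{cl}}=[\hat\kappa,\{S,-\}]$ is the classical TQM vector field, whose restriction to fields $(A,0)$ is $\int_0^1\langle\mathrm{d}_A\kappa_{\mathcal A}(A),\frac{\delta}{\delta A}\rangle$; $\Phi_T$ is the flow of $-H^{\mathrm{cl}}$. Path-ordered exponential convention: $P\exp(-\int_0^1A)=\lim\,(1-A(t_N)\Delta t)\cdots(1-A(t_1)\Delta t)$ with later times to the left (so $-\log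 P\exp(-\int_0^1 A)=\int_0^1A-\frac12\int_0^1\mathrm{d}t\int_0^t\mathrm{d}t'[\underline A(t),\underline A(t')]+\cdots$ with $A=\mathrm{d}t\,\underline A$, the Magnus expansion). *)

theory Defs
  imports "HOL-Analysis.Analysis"
begin

text \<open>The Lie algebra g is realised as a real Banach algebra with the commutator bracket.
A g-valued 1-form A = dt a(t) on I = [0,1] is represented by its coefficient a.\<close>

definition lie_bracket :: "'a::real_normed_algebra \<Rightarrow> 'a \<Rightarrow> 'a" where
  "lie_bracket x y = x * y - y * x"

definition kappaA :: "(real \<Rightarrow> 'a::real_normed_algebra) \<Rightarrow> real \<Rightarrow> 'a" where
  "kappaA a t = integral {0..1} (\<lambda>s. ((if s < t then 1 else 0) - t) *\<^sub>R a s)"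

definition covd :: "(real \<Rightarrow> 'a::real_normed_algebra) \<Rightarrow> (real \<Rightarrow> 'a) \<Rightarrow> real \<Rightarrow> 'a" where
  "covd a f t = vector_derivative f (at t within {0..1}) + lie_bracket (a t) (f t)"

text \<open>Path-ordered exponential P exp(- int_0^1 A) = U(1), where U(0) = 1 and
U' = - a U (later times to the left).\<close>
definition pexp_neg :: "(real \<Rightarrow> 'a::{real_normed_algebra_1,banach}) \<Rightarrow> 'a" where
  "pexp_neg a = (THE x. \<exists>U. U 0 = 1 \<and>
      (\<forall>t\<in>{0..1}. (U has_vector_derivative (- (a t * U t))) (at t within {0..1})) \<and> U 1 = x)"

definition alg_log :: "'a::{real_normed_algebra_1,banach} \<Rightarrow> 'a" where
  "alg_log x = (\<Sum>n. ((-1) ^ n / real (Suc n)) *\<^sub>R (x - 1) ^ Suc n)"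

end

theory Submission
  imports Defs "HOL-Real_Asymp.Real_Asymp"
begin

lemma norm_diff_le_majorant:
  fixes f :: "real \<Rightarrow> 'a::banach"
  assumes ab: "a \<le> b"
    and fd: "\<And>x. x \<in> {a..b} \<Longrightarrow> (f has_vector_derivative f' x) (at x within {a..b})"
    and gd: "\<And>x. x \<in> {a..b} \<Longrightarrow> (g has_real_derivative g' x) (at x within {a..b})"
    and le: "\<And>x. x \<in> {a..b} \<Longrightarrow> norm (f' x) \<le> g' x"
  shows "norm (f b - f a) \<le> g b - g a"
proof -
  have F: "(f' has_integral (f b - f a)) {a..b}"
    by (rule fundamental_theorem_of_calculus[OF ab fd])
  have G: "(g' has_integral (g b - g a)) {a..b}"
    by (rule fundamental_theorem_of_calculus[OF ab])
       (use gd in \<open>auto simp: has_real_derivative_iff_has_vector_derivative\<close>)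
  have "norm (integral {a..b} f') \<le> integral {a..b} g'"
    by (rule integral_norm_bound_integral) (use F G le in auto)
  then show ?thesis using F G by (simp add: integral_unique)
qed

lemma sup_attained:
  fixes f :: "real \<Rightarrow> 'a::real_normed_vector"
  assumes "a \<le> b" "continuous_on {a..b} f"
  shows "\<exists>t0\<in>{a..b}. \<forall>t\<in>{a..b}. norm (f t) \<le> norm (f t0)"
  using continuous_attains_sup[of "{a..b}" "\<lambda>t::real. norm (f t)"] continuous_on_norm[OF assms(2)] assms(1)
  by auto

lemma small_gronwall:
  fixes f :: "real \<Rightarrow> 'a::banach"
  assumes f0: "f 0 = 0"
    and fd: "\<And>t. t \<in> {0..1} \<Longrightarrow> (f has_vector_derivative f' t) (at t within {0..1})"
    and le: "\<And>t. t \<in> {0..1} \<Longrightarrow> norm (f' t) \<le> q * norm (f t) + \<beta>"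
    and q: "0 \<le> q" "q < 1" and \<beta>: "0 \<le> \<beta>"
  shows "\<And>t. t \<in> {0..1} \<Longrightarrow> norm (f t) \<le> \<beta> / (1 - q)"
proof -
  have cont: "continuous_on {0..1} f"
    using fd by (rule continuous_on_vector_derivative)
  obtain t0 where t0: "t0 \<in> {0..1}" "\<And>t. t \<in> {0..1} \<Longrightarrow> norm (f t) \<le> norm (f t0)"
    using sup_attained[OF _ cont] by auto
  define Mx where "Mx = norm (f t0)"
  have bnd: "norm (f t) \<le> q * Mx + \<beta>" if t: "t \<in> {0..1}" for t
  proof -
    have "norm (f t - f 0) \<le> (q * Mx + \<beta>) * t - (q * Mx + \<beta>) * 0"
    proof (rule norm_diff_le_majorant[where f' = f' and g' = "\<lambda>_. q * Mx + \<beta>"])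
      fix x assume x: "x \<in> {0..t}"
      then have x1: "x \<in> {0..1}" using t by auto
      show "(f has_vector_derivative f' x) (at x within {0..t})"
        by (rule has_vector_derivative_within_subset[OF fd[OF x1]]) (use t in auto)
      show "((\<lambda>x. (q * Mx + \<beta>) * x) has_real_derivative q * Mx + \<beta>) (at x within {0..t})"
        by (auto intro!: derivative_eq_intros)
      show "norm (f' x) \<le> q * Mx + \<beta>"
      proof -
        have "q * norm (f x) \<le> q * Mx"
          using t0(2)[OF x1] q by (simp add: Mx_def mult_left_mono)
        then show ?thesis using le[OF x1] by linarith
      qed
    qed (use t in auto)
    moreover have "0 \<le> q * Mx + \<beta>" using q \<beta> by (simp add: Mx_def)
    moreover have "(q * Mx + \<beta>) * t \<le> (q * Mx + \<beta>) * 1"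
      using t \<open>0 \<le> q * Mx + \<beta>\<close> by (intro mult_left_mono) auto
    ultimately show ?thesis using f0 by simp
  qed
  have "Mx \<le> q * Mx + \<beta>" using bnd[OF t0(1)] by (simp add: Mx_def)
  then have "Mx * (1 - q) \<le> \<beta>" by (simp add: algebra_simps)
  then have Mxb: "Mx \<le> \<beta> / (1 - q)" using q by (simp add: field_simps)
  fix t :: real assume "t \<in> {0..1}"
  then show "norm (f t) \<le> \<beta> / (1 - q)" using t0(2) Mxb unfolding Mx_def by force
qed

lemma slice_cont1:
  assumes "continuous_on (U \<times> V) (\<lambda>(x,t). F x t)" "x \<in> U"
  shows "continuous_on V (F x)"
proof -
  have "continuous_on V (\<lambda>t. (x,t))" by (auto intro!: continuous_intros)
  moreover have "(\<lambda>t. (x,t)) ` V \<subseteq> U \<times> V" using assms(2) by auto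
  ultimately show ?thesis using continuous_on_compose2[OF assms(1), of V "\<lambda>t. (x,t)"] by simp
qed

lemma slice_cont2:
  assumes "continuous_on (U \<times> V) (\<lambda>(x,t). F x t)" "t \<in> V"
  shows "continuous_on U (\<lambda>x. F x t)"
proof -
  have "continuous_on U (\<lambda>x. (x,t))" by (auto intro!: continuous_intros)
  moreover have "(\<lambda>x. (x,t)) ` U \<subseteq> U \<times> V" using assms(2) by auto
  ultimately show ?thesis using continuous_on_compose2[OF assms(1), of U "\<lambda>x. (x,t)"] by simp
qed

lemma prod_near:
  fixes F :: "real \<Rightarrow> real \<Rightarrow> 'c::metric_space"
  assumes cont: "continuous_on (U \<times> {0..1}) (\<lambda>(x,t). F x t)" and x0: "x0 \<in> U" and e: "e > 0"
  obtains r where "r > 0" "\<And>x (t::real). x \<in> U \<Longrightarrow> \<bar>x - x0\<bar> < r \<Longrightarrow> t \<in> {0..1} \<Longrightarrow> dist (F x t) (F x0 t) \<le> e"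
proof -
  obtain X0 where X0: "x0 \<in> X0" "open X0" "\<forall>x\<in>X0 \<inter> U. \<forall>t \<in> {0..1}. dist ((\<lambda>(x,t). F x t) (x, t)) ((\<lambda>(x,t). F x t) (x0, t)) \<le> e"
    using continuous_on_prod_compactE[OF cont compact_Icc x0 e] by blast
  obtain r where r: "r > 0" "ball x0 r \<subseteq> X0"
    using X0(1,2) open_contains_ball by blast
  show ?thesis
  proof (rule that[OF r(1)])
    fix x t :: real assume "x \<in> U" "\<bar>x - x0\<bar> < r" "t \<in> {0..1}"
    moreover then have "x \<in> X0" using r(2) by (auto simp: dist_real_def)
    ultimately show "dist (F x t) (F x0 t) \<le> e" using X0(3) by auto
  qed
qed

lemma cont_induction:
  fixes F :: "real \<Rightarrow> real \<Rightarrow> real"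
  assumes cont: "continuous_on ({0..} \<times> {0..1}) (\<lambda>(s,t). F s t)"
    and init: "\<And>t. t \<in> {0..1} \<Longrightarrow> F 0 t \<le> 1"
    and step: "\<And>T t. T \<ge> 0 \<Longrightarrow> (\<And>s t. s \<in> {0..T} \<Longrightarrow> t \<in> {0..1} \<Longrightarrow> F s t \<le> 1) \<Longrightarrow> t \<in> {0..1} \<Longrightarrow> F T t \<le> c"
    and c: "c < 1" and T0: "T0 \<ge> 0" and t0: "t0 \<in> {0..1}"
  shows "F T0 t0 \<le> 1"
proof (rule ccontr)
  define S where "S = {T. T \<ge> 0 \<and> (\<exists>t\<in>{0..1}. F T t > 1)}"
  assume "\<not> F T0 t0 \<le> 1"
  then have Sne: "S \<noteq> {}" unfolding S_def using T0 t0 by force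
  have bdd: "bdd_below S" unfolding S_def by (rule bdd_belowI[of _ 0]) auto
  define \<tau> where "\<tau> = Inf S"
  have tau0: "\<tau> \<ge> 0" unfolding \<tau>_def by (rule cInf_greatest[OF Sne]) (auto simp: S_def)
  have below: "F s t \<le> 1" if "0 \<le> s" "s < \<tau>" "t \<in> {0..1}" for s t
  proof (rule ccontr)
    assume "\<not> F s t \<le> 1"
    then have "s \<in> S" using that by (force simp: S_def not_le)
    then have "\<tau> \<le> s" unfolding \<tau>_def by (rule cInf_lower[OF _ bdd])
    then show False using that by simp
  qed
  have near: "\<exists>r>0. \<forall>x t. x \<ge> 0 \<longrightarrow> \<bar>x - \<tau>\<bar> < r \<longrightarrow> t \<in> {0..1} \<longrightarrow> \<bar>F x t - F \<tau> t\<bar> \<le> e" if e0: "e > 0" for e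
  proof -
    obtain r where "r > 0" "\<And>x t. x \<in> {0..} \<Longrightarrow> \<bar>x - \<tau>\<bar> < r \<Longrightarrow> t \<in> {0..1} \<Longrightarrow> dist (F x t) (F \<tau> t) \<le> e"
      using prod_near[OF cont _ e0, of \<tau>] tau0 by auto
    then show ?thesis by (auto simp: dist_real_def)
  qed
  have attau: "F \<tau> t \<le> 1" if t: "t \<in> {0..1}" for t
  proof (cases "\<tau> = 0")
    case True then show ?thesis using init t by simp
  next
    case False
    then have tpos: "\<tau> > 0" using tau0 by simp
    show ?thesis
    proof (rule field_le_epsilon)
      fix e :: real assume "e > 0"
      then obtain r where r: "r > 0" "\<And>x t. x \<ge> 0 \<Longrightarrow> \<bar>x - \<tau>\<bar> < r \<Longrightarrow> t \<in> {0..1} \<Longrightarrow> \<bar>F x t - F \<tau> t\<bar> \<le> e"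
        using near by blast
      define s where "s = \<tau> - min r \<tau> / 2"
      have s: "0 \<le> s" "s < \<tau>" "\<bar>s - \<tau>\<bar> < r" using r(1) tpos by (auto simp: s_def)
      have "F s t \<le> 1" using below[OF s(1,2) t] .
      moreover have "\<bar>F s t - F \<tau> t\<bar> \<le> e" using r(2)[OF s(1) s(3) t] .
      ultimately show "F \<tau> t \<le> 1 + e" by linarith
    qed
  qed
  have upto: "F s t \<le> 1" if "s \<in> {0..\<tau>}" "t \<in> {0..1}" for s t
    using below[of s t] attau[of t] that by (cases "s = \<tau>") auto
  have atc: "F \<tau> t \<le> c" if "t \<in> {0..1}" for t
    using step[OF tau0 upto that] .
  obtain r where r: "r > 0" "\<And>x t. x \<ge> 0 \<Longrightarrow> \<bar>x - \<tau>\<bar> < r \<Longrightarrow> t \<in> {0..1} \<Longrightarrow> \<bar>F x t - F \<tau> t\<bar> \<le> (1 - c) / 2"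
    using near[of "(1 - c) / 2"] c by auto
  have "\<tau> < \<tau> + r" using r(1) by simp
  then obtain x where x: "x \<in> S" "x < \<tau> + r" unfolding \<tau>_def using cInf_less_iff[OF Sne bdd] by blast
  have "\<tau> \<le> x" unfolding \<tau>_def by (rule cInf_lower[OF x(1) bdd])
  from x(1) obtain t where t: "x \<ge> 0" "t \<in> {0..1}" "F x t > 1" unfolding S_def by auto
  have "\<bar>F x t - F \<tau> t\<bar> \<le> (1 - c) / 2" using r(2)[OF t(1) _ t(2)] x(2) \<open>\<tau> \<le> x\<close> by auto
  then show False using atc[OF t(2)] t(3) c by (auto simp: abs_le_iff field_simps)
qed

lemma cont_integral_param:
  fixes F :: "real \<Rightarrow> real \<Rightarrow> 'a::banach"
  assumes cont: "continuous_on (U \<times> {0..1}) (\<lambda>(x,t). F x t)"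
  shows "continuous_on (U \<times> {0..1}) (\<lambda>(x,t). integral {0..t} (F x))"
  unfolding continuous_on_iff
proof (intro ballI allI impI)
  fix p :: "real \<times> real" and e :: real assume p: "p \<in> U \<times> {0..1}" and e: "(0::real) < e"
  obtain x0 t0 where p': "p = (x0, t0)" "x0 \<in> U" "t0 \<in> {0..1}" using p by auto
  have cx0: "continuous_on {0..1} (F x0)" by (rule slice_cont1[OF cont p'(2)])
  have cI: "continuous_on {0..1} (\<lambda>t. integral {0..t} (F x0))"
    by (rule continuous_on_vector_derivative[OF integral_has_vector_derivative[OF cx0]])
  obtain d1 where d1: "d1 > 0" "\<And>t. t \<in> {0..1} \<Longrightarrow> dist t t0 < d1 \<Longrightarrow> dist (integral {0..t} (F x0)) (integral {0..t0} (F x0)) < e / 2"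
    using cI p'(3) e unfolding continuous_on_iff by (metis half_gt_zero)
  obtain r where r: "r > 0" "\<And>x t. x \<in> U \<Longrightarrow> \<bar>x - x0\<bar> < r \<Longrightarrow> t \<in> {0..1} \<Longrightarrow> dist (F x t) (F x0 t) \<le> e / 4"
    using prod_near[OF cont p'(2), of "e/4"] e by auto
  show "\<exists>d>0. \<forall>p'\<in>U \<times> {0..1}. dist p' p < d \<longrightarrow>
          dist ((\<lambda>(x, t). integral {0..t} (F x)) p') ((\<lambda>(x, t). integral {0..t} (F x)) p) < e"
  proof (intro exI[of _ "min d1 r"] conjI ballI impI)
    show "min d1 r > 0" using d1 r by simp
    fix q assume q: "q \<in> U \<times> {0..1}" "dist q p < min d1 r"
    obtain x t where q': "q = (x, t)" "x \<in> U" "t \<in> {0..1}" using q by auto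
    have dx: "\<bar>x - x0\<bar> < r" using dist_fst_le[of q p] q(2) by (simp add: q' p' dist_real_def)
    have dt: "dist t t0 < d1" using dist_snd_le[of q p] q(2) by (simp add: q' p')
    have cx: "continuous_on {0..1} (F x)" by (rule slice_cont1[OF cont q'(2)])
    have "norm (integral {0..t} (\<lambda>s. F x s - F x0 s)) \<le> e / 4 * (t - 0)"
    proof (rule integral_bound)
      show "continuous_on {0..t} (\<lambda>s. F x s - F x0 s)"
        by (rule continuous_on_subset[of "{0..1}"]) (use q'(3) cx cx0 in \<open>auto intro!: continuous_intros\<close>)
      fix s assume "s \<in> {0..t}"
      then show "norm (F x s - F x0 s) \<le> e / 4" using r(2)[OF q'(2) dx, of s] q'(3) by (auto simp: dist_norm)
    qed (use q'(3) in auto)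
    also have "\<dots> \<le> e / 4" using q'(3) e by auto
    finally have A: "norm (integral {0..t} (\<lambda>s. F x s - F x0 s)) \<le> e / 4" .
    have "integral {0..t} (\<lambda>s. F x s - F x0 s) = integral {0..t} (F x) - integral {0..t} (F x0)"
      by (rule integral_diff; rule integrable_continuous_interval; rule continuous_on_subset[of "{0..1}"])
         (use cx cx0 q'(3) in auto)
    then have A': "dist (integral {0..t} (F x)) (integral {0..t} (F x0)) \<le> e / 4"
      using A by (simp add: dist_norm)
    have B: "dist (integral {0..t} (F x0)) (integral {0..t0} (F x0)) < e / 2"
      using d1(2)[OF q'(3) dt] .
    have "dist (integral {0..t} (F x)) (integral {0..t0} (F x0)) < e"
      using dist_triangle[of "integral {0..t} (F x)" "integral {0..t0} (F x0)" "integral {0..t} (F x0)"] A' B e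
      by linarith
    then show "dist ((\<lambda>(x, t). integral {0..t} (F x)) q) ((\<lambda>(x, t). integral {0..t} (F x)) p) < e"
      by (simp add: q' p')
  qed
qed

lemma kappa_eq:
  fixes f :: "real \<Rightarrow> 'a::{real_normed_algebra,banach}"
  assumes cf: "continuous_on {0..1} f" and t: "t \<in> {0..1}"
  shows "kappaA f t = integral {0..t} f - t *\<^sub>R integral {0..1} f"
proof -
  have "kappaA f t = integral {0..1} (\<lambda>s. (if s \<in> {0..t} then f s else 0) - t *\<^sub>R f s)"
    unfolding kappaA_def
    by (rule integral_spike[of "{t}"]) (auto simp: algebra_simps)
  also have "\<dots> = integral {0..1} (\<lambda>s. if s \<in> {0..t} then f s else 0) - integral {0..1} (\<lambda>s. t *\<^sub>R f s)"
  proof (rule integral_diff)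
    have "f integrable_on {0..t}"
      by (rule integrable_continuous_interval, rule continuous_on_subset[OF cf]) (use t in auto)
    moreover have "{0..t} \<inter> {0..1} = {0..t}" using t by auto
    ultimately have "f integrable_on ({0..t} \<inter> {0..1})" by (simp only:)
    then show "(\<lambda>s. if s \<in> {0..t} then f s else 0) integrable_on {0..1}"
      using has_integral_restrict_Int unfolding integrable_on_def by blast
    show "(\<lambda>s. t *\<^sub>R f s) integrable_on {0..1}"
      by (intro integrable_cmul integrable_continuous_interval cf)
  qed
  also have "\<dots> = integral {0..t} f - t *\<^sub>R integral {0..1} f"
  proof -
    have "{0..t} \<inter> {0..1} = {0..t}" using t by auto
    then have "integral {0..1} (\<lambda>s. if s \<in> {0..t} then f s else 0) = integral {0..t} f"
      by (simp only: integral_restrict_Int)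
    then show ?thesis by simp
  qed
  finally show ?thesis .
qed

lemma kappa_deriv:
  fixes f :: "real \<Rightarrow> 'a::{real_normed_algebra,banach}"
  assumes cf: "continuous_on {0..1} f" and t: "t \<in> {0..1}"
  shows "(kappaA f has_vector_derivative (f t - integral {0..1} f)) (at t within {0..1})"
proof -
  have "((\<lambda>u. integral {0..u} f - u *\<^sub>R integral {0..1} f) has_vector_derivative (f t - 1 *\<^sub>R integral {0..1} f)) (at t within {0..1})"
  proof (rule has_vector_derivative_diff)
    show "((\<lambda>u. integral {0..u} f) has_vector_derivative f t) (at t within {0..1})"
      by (rule integral_has_vector_derivative[OF cf t])
    show "((\<lambda>u. u *\<^sub>R integral {0..1} f) has_vector_derivative 1 *\<^sub>R integral {0..1} f) (at t within {0..1})"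
      by (intro derivative_eq_intros) auto
  qed
  then have "((\<lambda>u. integral {0..u} f - u *\<^sub>R integral {0..1} f) has_vector_derivative (f t - integral {0..1} f)) (at t within {0..1})"
    by simp
  then show ?thesis
    by (rule has_vector_derivative_transform_within[where d = 1]) (use t kappa_eq[OF cf] in auto)
qed

lemma kappa_vd:
  fixes f :: "real \<Rightarrow> 'a::{real_normed_algebra,banach}"
  assumes cf: "continuous_on {0..1} f" and t: "t \<in> {0..1}"
  shows "vector_derivative (kappaA f) (at t within {0..1}) = f t - integral {0..1} f"
  using vector_derivative_within_cbox[of 0 1 t "kappaA f"] kappa_deriv[OF cf t] t
  by (simp add: cbox_interval)

lemma kappa_0:
  fixes f :: "real \<Rightarrow> 'a::{real_normed_algebra,banach}"
  assumes cf: "continuous_on {0..1} f"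
  shows "kappaA f 0 = 0" "kappaA f 1 = 0"
  using kappa_eq[OF cf, of 0] kappa_eq[OF cf, of 1] by auto

definition is_trans :: "(real \<Rightarrow> 'a::real_normed_algebra_1) \<Rightarrow> (real \<Rightarrow> 'a) \<Rightarrow> bool" where
  "is_trans b U \<longleftrightarrow> U 0 = 1 \<and> (\<forall>t\<in>{0..1}. (U has_vector_derivative (- (b t * U t))) (at t within {0..1}))"

lemma trans_exists:
  fixes b :: "real \<Rightarrow> 'a::{real_normed_algebra_1,banach}"
  assumes cb: "continuous_on {0..1} b" and bb: "\<And>t. t \<in> {0..1} \<Longrightarrow> norm (b t) \<le> 1/2"
  shows "\<exists>U. is_trans b U"
proof -
  define P where "P = rec_nat (\<lambda>t. 1) (\<lambda>n Pn. \<lambda>t. - integral {0..t} (\<lambda>s. b s * Pn s))"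
  have P0: "P 0 = (\<lambda>t. 1)" by (simp add: P_def)
  have PS: "P (Suc n) = (\<lambda>t. - integral {0..t} (\<lambda>s. b s * P n s))" for n by (simp add: P_def)
  have Pprop: "continuous_on {0..1} (P n) \<and> (\<forall>t\<in>{0..1}. norm (P n t) \<le> (1/2)^n)" for n
  proof (induction n)
    case 0 then show ?case by (simp add: P0)
  next
    case (Suc n)
    have cbP: "continuous_on {0..1} (\<lambda>s. b s * P n s)"
      using Suc cb by (auto intro!: continuous_intros)
    have d: "(P (Suc n) has_vector_derivative - (b t * P n t)) (at t within {0..1})" if "t \<in> {0..1}" for t
      unfolding PS by (intro has_vector_derivative_minus integral_has_vector_derivative[OF cbP that])
    have c: "continuous_on {0..1} (P (Suc n))"
      by (rule continuous_on_vector_derivative[OF d])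
    have n: "norm (P (Suc n) t) \<le> (1/2)^Suc n" if t: "t \<in> {0..1}" for t
    proof -
      have "norm (integral {0..t} (\<lambda>s. b s * P n s)) \<le> (1/2)^Suc n * (t - 0)"
      proof (rule integral_bound)
        show "continuous_on {0..t} (\<lambda>s. b s * P n s)"
          by (rule continuous_on_subset[OF cbP]) (use t in auto)
        fix s assume s: "s \<in> {0..t}"
        then have s1: "s \<in> {0..1}" using t by auto
        have "norm (b s * P n s) \<le> norm (b s) * norm (P n s)" by (rule norm_mult_ineq)
        also have "\<dots> \<le> (1/2) * (1/2)^n"
          using bb[OF s1] Suc s1 by (intro mult_mono) auto
        finally show "norm (b s * P n s) \<le> (1/2)^Suc n" by simp
      qed (use t in auto)
      also have "\<dots> \<le> (1/2)^Suc n" using t by (auto intro: mult_left_le_one_le simp: mult_le_cancel_left1)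
      finally show ?thesis by (simp add: PS)
    qed
    show ?case using c n by auto
  qed
  define P' where "P' n t = (case n of 0 \<Rightarrow> 0 | Suc m \<Rightarrow> - (b t * P m t))" for n t
  have Pd: "(P n has_vector_derivative P' n t) (at t within {0..1})" if "t \<in> {0..1}" for n t
  proof (cases n)
    case 0 then show ?thesis by (simp add: P0 P'_def)
  next
    case (Suc m)
    have cbP: "continuous_on {0..1} (\<lambda>s. b s * P m s)"
      using Pprop[of m] cb by (auto intro!: continuous_intros)
    show ?thesis
      unfolding Suc PS P'_def by (simp, intro has_vector_derivative_minus integral_has_vector_derivative[OF cbP that])
  qed
  define U where "U x = suminf (\<lambda>n. P n x)" for x
  have geo: "summable (\<lambda>n. (1/2::real)^n)" by (rule summable_geometric) simp
  have summ: "summable (\<lambda>n. P n x)" if "x \<in> {0..1}" for x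
    by (rule summable_norm_cancel, rule summable_norm_comparison_test[OF _ geo]) (use Pprop that in auto)
  have tail: "norm (U x - (\<Sum>i<k. P i x)) \<le> 2 * (1/2)^k" if x: "x \<in> {0..1}" for x k
  proof -
    have "U x - (\<Sum>i<k. P i x) = (\<Sum>n. P (n + k) x)"
      using suminf_split_initial_segment[OF summ[OF x], of k] by (simp add: U_def)
    also have "norm \<dots> \<le> (\<Sum>n. (1/2)^k * (1/2::real)^n)"
    proof (rule norm_suminf_le)
      show "norm (P (n + k) x) \<le> (1/2)^k * (1/2)^n" for n
        using Pprop[of "n+k"] x by (simp add: power_add mult.commute)
      show "summable (\<lambda>n. (1/2::real)^k * (1/2)^n)" by (rule summable_mult[OF geo])
    qed
    also have "\<dots> = 2 * (1/2)^k"
      by (simp add: suminf_mult[OF geo] suminf_geometric)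
    finally show ?thesis .
  qed
  have sumP': "(\<Sum>i<Suc m. P' i x) = - (b x * (\<Sum>i<m. P i x))" for m x
    by (induction m) (simp_all add: P'_def distrib_left)
  have "\<exists>g. \<forall>x\<in>{0..1}. (\<lambda>n. P n x) sums (g x) \<and> (g has_derivative (\<lambda>h. h *\<^sub>R (- (b x * U x)))) (at x within {0..1})"
  proof (rule has_derivative_series[where f' = "\<lambda>n x h. h *\<^sub>R P' n x"])
    show "convex {0..1::real}" by simp
    show "(P n has_derivative (\<lambda>h. h *\<^sub>R P' n x)) (at x within {0..1})" if "x \<in> {0..1}" for n x
      using Pd[OF that, of n] by (simp add: has_vector_derivative_def)
    show "(0::real) \<in> {0..1}" by simp
    have "P n 0 = (if n = 0 then 1 else 0)" for n by (cases n) (simp_all add: P0 PS)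
    then show "(\<lambda>n. P n 0) sums 1" using sums_single[of 0 "\<lambda>_. 1::'a"] by simp
    fix e :: real assume e: "e > 0"
    have "(\<lambda>n. (2::real) * (1/2)^n) \<longlonglongrightarrow> 2 * 0"
      by (intro tendsto_mult tendsto_const LIMSEQ_power_zero) simp
    then have ev1: "\<forall>\<^sub>F n in sequentially. (2::real) * (1/2)^n < e"
      by (rule order_tendstoD(2)) (use e in simp)
    have ev2: "\<forall>\<^sub>F n in sequentially. n \<ge> 1" by (rule eventually_ge_at_top)
    show "\<forall>\<^sub>F n in sequentially. \<forall>x\<in>{0..1}. \<forall>h. norm ((\<Sum>i<n. h *\<^sub>R P' i x) - h *\<^sub>R (- (b x * U x))) \<le> e * norm h"
    proof (rule eventually_mono[OF eventually_conj[OF ev1 ev2]], intro ballI allI)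
      fix n :: nat and x h :: real assume n: "(2::real) * (1/2)^n < e \<and> n \<ge> 1" and x: "x \<in> {0..1}"
      then obtain m where m: "n = Suc m" by (cases n) auto
      have "(\<Sum>i<Suc m. P' i x) - (- (b x * U x)) = b x * (U x - (\<Sum>i<m. P i x))"
        unfolding sumP' by (simp add: algebra_simps)
      then have eq: "(\<Sum>i<n. h *\<^sub>R P' i x) - h *\<^sub>R (- (b x * U x)) = h *\<^sub>R (b x * (U x - (\<Sum>i<m. P i x)))"
        unfolding m by (metis scaleR_sum_right scaleR_diff_right)
      have "norm (b x * (U x - (\<Sum>i<m. P i x))) \<le> norm (b x) * norm (U x - (\<Sum>i<m. P i x))"
        by (rule norm_mult_ineq)
      also have "\<dots> \<le> (1/2) * (2 * (1/2)^m)"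
        using bb[OF x] tail[OF x, of m] by (intro mult_mono) auto
      also have "\<dots> = 2 * (1/2)^n" by (simp add: m)
      also have "\<dots> \<le> e" using n by simp
      finally have "norm (b x * (U x - (\<Sum>i<m. P i x))) \<le> e" .
      then show "norm ((\<Sum>i<n. h *\<^sub>R P' i x) - h *\<^sub>R (- (b x * U x))) \<le> e * norm h"
        unfolding eq by (simp add: mult.commute[of e] mult_left_mono)
    qed
  qed
  then obtain g where g: "\<And>x. x \<in> {0..1} \<Longrightarrow> (\<lambda>n. P n x) sums (g x) \<and> (g has_derivative (\<lambda>h. h *\<^sub>R (- (b x * U x)))) (at x within {0..1})"
    by blast
  have gU: "g x = U x" if "x \<in> {0..1}" for x
    using g[OF that] by (simp add: U_def sums_unique)
  have g0: "g 0 = 1"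
  proof -
    have "P n 0 = (if n = 0 then 1 else 0)" for n by (cases n) (simp_all add: P0 PS)
    then have "(\<lambda>n. P n 0) sums 1" using sums_single[of 0 "\<lambda>_. 1::'a"] by simp
    then show ?thesis using g[of 0] sums_unique2 by auto
  qed
  have "is_trans b g"
    unfolding is_trans_def
  proof (intro conjI ballI g0)
    fix t :: real assume t: "t \<in> {0..1}"
    have "(g has_derivative (\<lambda>h. h *\<^sub>R (- (b t * g t)))) (at t within {0..1})"
      using g[OF t] gU[OF t] by simp
    then show "(g has_vector_derivative - (b t * g t)) (at t within {0..1})"
      by (simp add: has_vector_derivative_def)
  qed
  then show ?thesis by blast
qed

lemma trans_cont:
  assumes "is_trans b U"
  shows "continuous_on {0..1} U"
  using assms unfolding is_trans_def by (intro continuous_on_vector_derivative) auto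

lemma trans_unique:
  fixes b :: "real \<Rightarrow> 'a::{real_normed_algebra_1,banach}"
  assumes bb: "\<And>t. t \<in> {0..1} \<Longrightarrow> norm (b t) \<le> 1/2"
    and U: "is_trans b U" and V: "is_trans b V" and t: "t \<in> {0..1}"
  shows "U t = V t"
proof -
  have "norm (U t - V t) \<le> 0 / (1 - 1/2)"
  proof (rule small_gronwall[where f = "\<lambda>t. U t - V t" and f' = "\<lambda>t. - (b t * (U t - V t))" and q = "1/2"])
    show "U 0 - V 0 = 0" using U V by (simp add: is_trans_def)
    fix s :: real assume s: "s \<in> {0..1}"
    have "((\<lambda>t. U t - V t) has_vector_derivative (- (b s * U s)) - (- (b s * V s))) (at s within {0..1})"
      using U V s unfolding is_trans_def by (intro has_vector_derivative_diff) auto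
    then show "((\<lambda>t. U t - V t) has_vector_derivative - (b s * (U s - V s))) (at s within {0..1})"
      by (simp add: algebra_simps)
    have "norm (- (b s * (U s - V s))) \<le> norm (b s) * norm (U s - V s)"
      by (simp add: norm_mult_ineq)
    also have "\<dots> \<le> 1/2 * norm (U s - V s)" using bb[OF s] by (intro mult_right_mono) auto
    finally show "norm (- (b s * (U s - V s))) \<le> 1/2 * norm (U s - V s) + 0" by simp
  qed (use t in auto)
  then show ?thesis by simp
qed

lemma trans_bound:
  fixes b :: "real \<Rightarrow> 'a::{real_normed_algebra_1,banach}"
  assumes bb: "\<And>t. t \<in> {0..1} \<Longrightarrow> norm (b t) \<le> 1/4"
    and U: "is_trans b U" and t: "t \<in> {0..1}"
  shows "norm (U t) \<le> 4/3"
proof -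
  have "norm (U t - 1) \<le> (1/4) / (1 - 1/4)"
  proof (rule small_gronwall[where f = "\<lambda>t. U t - 1" and f' = "\<lambda>t. - (b t * U t)" and q = "1/4"])
    show "U 0 - 1 = 0" using U by (simp add: is_trans_def)
    fix s :: real assume s: "s \<in> {0..1}"
    show "((\<lambda>t. U t - 1) has_vector_derivative - (b s * U s)) (at s within {0..1})"
      using U s unfolding is_trans_def by (intro derivative_eq_intros) auto
    have "norm (- (b s * U s)) \<le> norm (b s) * norm (U s)"
      by (simp add: norm_mult_ineq)
    also have "\<dots> \<le> 1/4 * (norm (U s - 1) + 1)"
      using bb[OF s] norm_triangle_ineq[of "U s - 1" 1]
      by (intro mult_mono) auto
    finally show "norm (- (b s * U s)) \<le> 1/4 * norm (U s - 1) + 1/4" by simp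
  qed (use t in auto)
  then have "norm (U t - 1) \<le> 1/3" by simp
  then show ?thesis using norm_triangle_ineq[of "U t - 1" 1] by simp
qed

lemma trans_compare:
  fixes b1 b2 :: "real \<Rightarrow> 'a::{real_normed_algebra_1,banach}"
  assumes bb: "\<And>t. t \<in> {0..1} \<Longrightarrow> norm (b1 t) \<le> 1/4"
    and U1: "is_trans b1 U1" and U2: "is_trans b2 U2"
    and rho: "\<And>t. t \<in> {0..1} \<Longrightarrow> norm (b1 t - b2 t) \<le> \<rho>"
    and U2b: "\<And>t. t \<in> {0..1} \<Longrightarrow> norm (U2 t) \<le> 2"
    and t: "t \<in> {0..1}"
  shows "norm (U1 t - U2 t) \<le> 8/3 * \<rho>"
proof -
  have r0: "\<rho> \<ge> 0" using rho[of 0] norm_ge_zero[of "b1 0 - b2 0"] by (simp del: norm_ge_zero)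
  have "norm (U1 t - U2 t) \<le> (2 * \<rho>) / (1 - 1/4)"
  proof (rule small_gronwall[where f = "\<lambda>t. U1 t - U2 t" and f' = "\<lambda>t. - (b1 t * (U1 t - U2 t)) - (b1 t - b2 t) * U2 t" and q = "1/4"])
    show "U1 0 - U2 0 = 0" using U1 U2 by (simp add: is_trans_def)
    fix s :: real assume s: "s \<in> {0..1}"
    have "((\<lambda>t. U1 t - U2 t) has_vector_derivative (- (b1 s * U1 s)) - (- (b2 s * U2 s))) (at s within {0..1})"
      using U1 U2 s unfolding is_trans_def by (intro has_vector_derivative_diff) auto
    then show "((\<lambda>t. U1 t - U2 t) has_vector_derivative - (b1 s * (U1 s - U2 s)) - (b1 s - b2 s) * U2 s) (at s within {0..1})"
      by (simp add: algebra_simps)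
    have "norm (- (b1 s * (U1 s - U2 s)) - (b1 s - b2 s) * U2 s) \<le> norm (b1 s * (U1 s - U2 s)) + norm ((b1 s - b2 s) * U2 s)"
      by (rule order_trans[OF norm_triangle_ineq4]) simp
    also have "\<dots> \<le> norm (b1 s) * norm (U1 s - U2 s) + norm (b1 s - b2 s) * norm (U2 s)"
      by (intro add_mono norm_mult_ineq)
    also have "\<dots> \<le> 1/4 * norm (U1 s - U2 s) + \<rho> * 2"
      using bb[OF s] rho[OF s] U2b[OF s] r0 by (intro add_mono mult_mono) auto
    finally show "norm (- (b1 s * (U1 s - U2 s)) - (b1 s - b2 s) * U2 s) \<le> 1/4 * norm (U1 s - U2 s) + 2 * \<rho>"
      by simp
  qed (use t r0 in auto)
  then show ?thesis by simp
qed

lemma pexp_eq: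
  fixes b :: "real \<Rightarrow> 'a::{real_normed_algebra_1,banach}"
  assumes bb: "\<And>t. t \<in> {0..1} \<Longrightarrow> norm (b t) \<le> 1/2" and U: "is_trans b U"
  shows "pexp_neg b = U 1"
  unfolding pexp_neg_def
proof (rule the_equality)
  show "\<exists>V. V 0 = 1 \<and> (\<forall>t\<in>{0..1}. (V has_vector_derivative - (b t * V t)) (at t within {0..1})) \<and> V 1 = U 1"
    using U unfolding is_trans_def by blast
  fix x assume "\<exists>V. V 0 = 1 \<and> (\<forall>t\<in>{0..1}. (V has_vector_derivative - (b t * V t)) (at t within {0..1})) \<and> V 1 = x"
  then obtain V where V: "is_trans b V" "V 1 = x" unfolding is_trans_def by blast
  show "x = U 1" using trans_unique[OF bb V(1) U, of 1] V(2) by simp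
qed

lemma trans_const:
  fixes c :: "'a::{real_normed_algebra_1,banach}"
  shows "is_trans (\<lambda>t. c) (\<lambda>t. exp (t *\<^sub>R (- c)))"
  unfolding is_trans_def
proof (intro conjI ballI)
  show "exp (0 *\<^sub>R (- c)) = 1" by simp
  fix t :: real
  have "((\<lambda>t. exp (t *\<^sub>R (- c))) has_vector_derivative (- c) * exp (t *\<^sub>R (- c))) (at t within {0..1})"
    by (rule has_vector_derivative_at_within[OF exp_scaleR_has_vector_derivative_left])
  then show "((\<lambda>t. exp (t *\<^sub>R (- c))) has_vector_derivative - (c * exp (t *\<^sub>R (- c)))) (at t within {0..1})"
    by simp
qed

lemma log_exp:
  fixes x :: "'a::{real_normed_algebra_1,banach}"
  assumes nx: "norm x \<le> 1/4"
  shows "alg_log (exp x) = x"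
proof -
  define y where "y s = exp (s *\<^sub>R x)" for s :: real
  define w where "w s = y s - 1" for s :: real
  have yd: "(y has_vector_derivative x * y s) (at s within {0..1})" for s
    unfolding y_def by (rule has_vector_derivative_at_within[OF exp_scaleR_has_vector_derivative_left])
  have wd: "(w has_vector_derivative x * y s) (at s within {0..1})" for s
    unfolding w_def using yd[of s] by (intro derivative_eq_intros) auto
  have xw: "x * w s = w s * x" for s
    unfolding w_def y_def using exp_times_scaleR_commute[of s x] by (simp add: algebra_simps)
  have yw: "y s = 1 + w s" for s by (simp add: w_def)
  have wb: "norm (w s) \<le> 1/2" if s: "s \<in> {0..1}" for s
  proof -
    have "norm (y s - y 0) \<le> 1/2 * s - 1/2 * 0"
    proof (rule norm_diff_le_majorant[where f' = "\<lambda>s. x * y s" and g' = "\<lambda>_. 1/2"])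
      fix r assume r: "r \<in> {0..s}"
      show "(y has_vector_derivative x * y r) (at r within {0..s})"
        by (rule has_vector_derivative_within_subset[OF yd]) (use s in auto)
      show "((\<lambda>s. 1/2 * s) has_real_derivative 1/2) (at r within {0..s})"
        by (auto intro!: derivative_eq_intros)
      have "r * norm x \<le> 1 * (1/4)" using r s nx by (intro mult_mono) auto
      then have "norm (r *\<^sub>R x) \<le> 1/2" using r by simp
      then have "norm (y r) \<le> 2" unfolding y_def by (rule exp_bound_half)
      then have "norm x * norm (y r) \<le> 1/4 * 2" using nx by (intro mult_mono) auto
      then show "norm (x * y r) \<le> 1/2" using norm_mult_ineq[of x "y r"] by simp
    qed (use s in auto)
    then show ?thesis using s by (simp add: w_def y_def)
  qed
  have pd: "((\<lambda>s. w s ^ Suc n) has_vector_derivative (of_nat (Suc n)) *\<^sub>R (w s ^ n * (x * y s))) (at s within {0..1})" for n s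
  proof (induction n)
    case 0 then show ?case using wd[of s] by simp
  next
    case (Suc n)
    have c1: "(x * y s) * w s ^ Suc n = w s ^ Suc n * (x * y s)"
    proof -
      have "w s * (x * y s) = (x * y s) * w s"
        unfolding yw by (simp add: algebra_simps xw)
      then show ?thesis by (rule power_commuting_commutes[symmetric])
    qed
    have "((\<lambda>s. w s * w s ^ Suc n) has_vector_derivative
          w s * ((of_nat (Suc n)) *\<^sub>R (w s ^ n * (x * y s))) + (x * y s) * w s ^ Suc n) (at s within {0..1})"
      by (rule has_vector_derivative_mult[OF wd Suc])
    moreover have "w s * ((of_nat (Suc n)) *\<^sub>R (w s ^ n * (x * y s))) + (x * y s) * w s ^ Suc n
        = (of_nat (Suc (Suc n))) *\<^sub>R (w s ^ Suc n * (x * y s))"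
    proof -
      have e1: "w s * ((of_nat (Suc n)) *\<^sub>R (w s ^ n * (x * y s))) = (of_nat (Suc n)) *\<^sub>R (w s ^ Suc n * (x * y s))"
        by (simp only: mult_scaleR_right power_Suc mult.assoc)
      show ?thesis unfolding e1 c1 by (simp add: scaleR_left_distrib scaleR_2)
    qed
    ultimately show ?case by simp
  qed
  define f where "f n s = ((-1) ^ n / real (Suc n)) *\<^sub>R w s ^ Suc n" for n s
  define f' where "f' n s = (\<lambda>h::real. h *\<^sub>R (((-1::real) ^ n) *\<^sub>R (w s ^ n * (x * y s))))" for n s
  have fd: "(f n has_derivative f' n s) (at s within {0..1})" for n s
  proof -
    have "(f n has_vector_derivative ((-1) ^ n / real (Suc n)) *\<^sub>R ((of_nat (Suc n)) *\<^sub>R (w s ^ n * (x * y s)))) (at s within {0..1})"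
      unfolding f_def by (rule bounded_linear.has_vector_derivative[OF bounded_linear_scaleR_right pd])
    moreover have "((-1) ^ n / real (Suc n)) *\<^sub>R ((of_nat (Suc n)) *\<^sub>R (w s ^ n * (x * y s))) = ((-1::real) ^ n) *\<^sub>R (w s ^ n * (x * y s))"
      by (simp del: of_nat_Suc)
    ultimately show ?thesis by (simp add: has_vector_derivative_def f'_def)
  qed
  have sumf': "(\<Sum>i<n. ((-1::real) ^ i) *\<^sub>R (w s ^ i * (x * y s))) = x - ((-1::real) ^ n) *\<^sub>R (w s ^ n * x)" for n s
  proof (induction n)
    case 0 then show ?case by simp
  next
    case (Suc n)
    have "w s ^ n * x * w s = w s ^ Suc n * x"
      by (simp only: mult.assoc xw power_Suc2)
    then have "w s ^ n * (x * y s) = w s ^ n * x + w s ^ Suc n * x"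
      by (simp add: yw algebra_simps)
    then show ?case using Suc by (simp add: algebra_simps)
  qed
  have "\<exists>g. \<forall>s\<in>{0..1}. (\<lambda>n. f n s) sums (g s) \<and> (g has_derivative (\<lambda>h. h *\<^sub>R x)) (at s within {0..1})"
  proof (rule has_derivative_series[where f' = f'])
    show "convex {0..1::real}" by simp
    show "(f n has_derivative f' n s) (at s within {0..1})" if "s \<in> {0..1}" for n s by (rule fd)
    show "(0::real) \<in> {0..1}" by simp
    have "w 0 = 0" by (simp add: w_def y_def)
    then have "f n 0 = 0" for n by (simp add: f_def)
    then show "(\<lambda>n. f n 0) sums 0" by simp
    fix e :: real assume e: "e > 0"
    have "(\<lambda>n. (1/2::real)^n) \<longlonglongrightarrow> 0"
      by (intro LIMSEQ_power_zero) simp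
    then have ev: "\<forall>\<^sub>F n in sequentially. (1/2::real)^n < e"
      by (rule order_tendstoD(2)) (use e in simp)
    show "\<forall>\<^sub>F n in sequentially. \<forall>s\<in>{0..1}. \<forall>h. norm ((\<Sum>i<n. f' i s h) - h *\<^sub>R x) \<le> e * norm h"
    proof (rule eventually_mono[OF ev], intro ballI allI)
      fix n :: nat and s h :: real assume n: "(1/2::real)^n < e" and s: "s \<in> {0..1}"
      have "(\<Sum>i<n. f' i s h) - h *\<^sub>R x = h *\<^sub>R ((\<Sum>i<n. ((-1::real) ^ i) *\<^sub>R (w s ^ i * (x * y s))) - x)"
        by (simp add: f'_def scaleR_sum_right scaleR_diff_right)
      also have "\<dots> = - (h *\<^sub>R (((-1::real) ^ n) *\<^sub>R (w s ^ n * x)))"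
        unfolding sumf' by simp
      finally have eq: "(\<Sum>i<n. f' i s h) - h *\<^sub>R x = - (h *\<^sub>R (((-1::real) ^ n) *\<^sub>R (w s ^ n * x)))" .
      have "norm (w s ^ n * x) \<le> norm (w s ^ n) * norm x" by (rule norm_mult_ineq)
      also have "\<dots> \<le> (1/2)^n * 1"
      proof (rule mult_mono)
        have "norm (w s) ^ n \<le> (1/2)^n" using wb[OF s] by (intro power_mono) auto
        then show "norm (w s ^ n) \<le> (1/2)^n" using norm_power_ineq[of "w s" n] by linarith
      qed (use nx in auto)
      finally have "norm (w s ^ n * x) \<le> e" using n by simp
      then show "norm ((\<Sum>i<n. f' i s h) - h *\<^sub>R x) \<le> e * norm h"
        unfolding eq by (simp add: mult.commute[of e] mult_left_mono abs_mult power_abs)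
    qed
  qed
  then obtain g where g: "\<And>s. s \<in> {0..1} \<Longrightarrow> (\<lambda>n. f n s) sums (g s) \<and> (g has_derivative (\<lambda>h. h *\<^sub>R x)) (at s within {0..1})"
    by blast
  have g0: "g 0 = 0"
  proof -
    have "w 0 = 0" by (simp add: w_def y_def)
    then have "(\<lambda>n. f n 0) sums 0" by (simp add: f_def)
    then show ?thesis using g[of 0] sums_unique2 by auto
  qed
  have "\<exists>c. \<forall>s\<in>{0..1}. g s - s *\<^sub>R x = c"
  proof (rule has_derivative_zero_constant)
    fix s :: real assume s: "s \<in> {0..1}"
    have "((\<lambda>s. g s - s *\<^sub>R x) has_derivative (\<lambda>h. h *\<^sub>R x - h *\<^sub>R x)) (at s within {0..1})"
      using g[OF s] by (intro derivative_eq_intros) auto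
    then show "((\<lambda>s. g s - s *\<^sub>R x) has_derivative (\<lambda>h. 0)) (at s within {0..1})" by simp
  qed simp
  then obtain c where c: "\<And>s. s \<in> {0..1} \<Longrightarrow> g s - s *\<^sub>R x = c" by blast
  have g1: "g 1 = x" using c[of 0] c[of 1] g0 by simp
  have "alg_log (exp x) = suminf (\<lambda>n. f n 1)"
    by (simp add: alg_log_def f_def w_def y_def)
  also have "\<dots> = g 1" using g[of 1] by (simp add: sums_unique[symmetric])
  finally show ?thesis using g1 by simp
qed

lemma integral_const_ivl:
  fixes c :: "'a::banach"
  assumes "a \<le> b"
  shows "integral {a..b} (\<lambda>x::real. c) = (b - a) *\<^sub>R c"
  using assms by (metis cbox_interval content_real integral_const)

lemma norm_bracket: "norm (lie_bracket x y) \<le> 2 * norm x * norm y"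
proof -
  have "norm (lie_bracket x y) \<le> norm (x * y) + norm (y * x)"
    unfolding lie_bracket_def by (rule norm_triangle_ineq4)
  also have "\<dots> \<le> norm x * norm y + norm y * norm x"
    by (intro add_mono norm_mult_ineq)
  finally show ?thesis by simp
qed

definition mm :: "(real \<Rightarrow> real \<Rightarrow> 'a::{real_normed_algebra_1,banach}) \<Rightarrow> real \<Rightarrow> 'a" where
  "mm aa T = integral {0..1} (aa T)"
definition dd :: "(real \<Rightarrow> real \<Rightarrow> 'a::{real_normed_algebra_1,banach}) \<Rightarrow> real \<Rightarrow> real \<Rightarrow> 'a" where
  "dd aa T t = aa T t - mm aa T"
definition kk :: "(real \<Rightarrow> real \<Rightarrow> 'a::{real_normed_algebra_1,banach}) \<Rightarrow> real \<Rightarrow> real \<Rightarrow> 'a" where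
  "kk aa T t = kappaA (aa T) t"
definition br :: "(real \<Rightarrow> real \<Rightarrow> 'a::{real_normed_algebra_1,banach}) \<Rightarrow> real \<Rightarrow> real \<Rightarrow> 'a" where
  "br aa T t = lie_bracket (aa T t) (kk aa T t)"
definition GG :: "(real \<Rightarrow> real \<Rightarrow> 'a::{real_normed_algebra_1,banach}) \<Rightarrow> real \<Rightarrow> real \<Rightarrow> 'a" where
  "GG aa T t = - (aa T t - mm aa T + br aa T t)"

locale flow =
  fixes aa :: "real \<Rightarrow> real \<Rightarrow> 'a::{real_normed_algebra_1,banach}"
  assumes cont: "continuous_on ({0..} \<times> {0..1}) (\<lambda>(T, t). aa T t)"
    and deriv: "\<And>T t. T \<ge> 0 \<Longrightarrow> t \<in> {0..1} \<Longrightarrow>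
        ((\<lambda>T'. aa T' t) has_vector_derivative (- covd (aa T) (kappaA (aa T)) t)) (at T within {0..})"

context flow
begin

lemma cont_slice: "T \<ge> 0 \<Longrightarrow> continuous_on {0..1} (aa T)"
  using slice_cont1[OF cont] by auto

lemma cont_I: "continuous_on ({0..} \<times> {0..1}) (\<lambda>(T, t). integral {0..t} (aa T))"
  by (rule cont_integral_param[OF cont])

lemma cont_mm: "continuous_on {0..} (mm aa)"
  using slice_cont2[OF cont_I, of 1] by (simp add: mm_def)

lemma kk_eq: "T \<ge> 0 \<Longrightarrow> t \<in> {0..1} \<Longrightarrow> kk aa T t = integral {0..t} (aa T) - t *\<^sub>R mm aa T"
  unfolding kk_def mm_def by (rule kappa_eq[OF cont_slice])

lemma cont_kk: "continuous_on ({0..} \<times> {0..1}) (\<lambda>(T, t). kk aa T t)"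
proof -
  have "continuous_on ({0..} \<times> {0..1}) (\<lambda>p. integral {0..snd p} (aa (fst p)) - snd p *\<^sub>R mm aa (fst p))"
  proof (intro continuous_intros)
    show "continuous_on ({0..} \<times> {0..1}) (\<lambda>p. integral {0..snd p} (aa (fst p)))"
      using cont_I by (simp add: split_beta)
    show "continuous_on ({0..} \<times> {0..1}) (\<lambda>p. mm aa (fst p))"
      by (rule continuous_on_compose2[OF cont_mm]) (auto intro!: continuous_intros)
  qed
  then show ?thesis
    by (rule continuous_on_eq) (auto simp: kk_eq)
qed

lemma cont_aa': "continuous_on ({0..} \<times> {0..1}) (\<lambda>p. aa (fst p) (snd p))"
  using cont by (simp add: split_beta)

lemma cont_mm': "continuous_on ({0..} \<times> {0..1}) (\<lambda>p. mm aa (fst p))"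
  by (rule continuous_on_compose2[OF cont_mm]) (auto intro!: continuous_intros)

lemma cont_kk': "continuous_on ({0..} \<times> {0..1}) (\<lambda>p. kk aa (fst p) (snd p))"
  using cont_kk by (simp add: split_beta)

lemma cont_br: "continuous_on ({0..} \<times> {0..1}) (\<lambda>(T, t). br aa T t)"
  unfolding br_def lie_bracket_def split_beta
  using cont_aa' cont_kk' by (intro continuous_intros)

lemma cont_dd: "continuous_on ({0..} \<times> {0..1}) (\<lambda>(T, t). dd aa T t)"
  unfolding dd_def split_beta
  using cont_aa' cont_mm' by (intro continuous_intros)

lemma cont_GG: "continuous_on ({0..} \<times> {0..1}) (\<lambda>(T, t). GG aa T t)"
  unfolding GG_def split_beta
  using cont_aa' cont_mm' cont_br by (intro continuous_intros) (simp_all add: split_beta)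

lemma GG_deriv: "T \<ge> 0 \<Longrightarrow> t \<in> {0..1} \<Longrightarrow> ((\<lambda>T'. aa T' t) has_vector_derivative GG aa T t) (at T within {0..})"
proof -
  assume T: "T \<ge> 0" and t: "t \<in> {0..1}"
  have "covd (aa T) (kappaA (aa T)) t = aa T t - mm aa T + br aa T t"
    unfolding covd_def br_def kk_def mm_def
    using kappa_vd[OF cont_slice[OF T] t] by simp
  then show ?thesis using deriv[OF T t] by (simp add: GG_def)
qed

lemma cont_brT: "T \<ge> 0 \<Longrightarrow> continuous_on {0..1} (br aa T)"
  using slice_cont1[OF cont_br] by auto

lemma cont_ddT: "T \<ge> 0 \<Longrightarrow> continuous_on {0..1} (dd aa T)"
  using slice_cont1[OF cont_dd] by auto

lemma mm_deriv: "T \<ge> 0 \<Longrightarrow> (mm aa has_vector_derivative - integral {0..1} (br aa T)) (at T within {0..})"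
proof -
  assume T: "T \<ge> 0"
  have "((\<lambda>x. integral (cbox 0 1) (aa x)) has_vector_derivative integral (cbox 0 1) (GG aa T)) (at T within {0..})"
  proof (rule leibniz_rule_vector_derivative)
    show "\<And>x t. x \<in> {0..} \<Longrightarrow> t \<in> cbox 0 1 \<Longrightarrow> ((\<lambda>x. aa x t) has_vector_derivative GG aa x t) (at x within {0..})"
      using GG_deriv by (auto simp: cbox_interval)
    show "\<And>x. x \<in> {0..} \<Longrightarrow> aa x integrable_on cbox 0 1"
      using cont_slice by (auto simp: cbox_interval intro!: integrable_continuous_interval)
    show "continuous_on ({0..} \<times> cbox 0 1) (\<lambda>(x, t). GG aa x t)"
      using cont_GG by (simp add: cbox_interval)
  qed (use T in auto)
  moreover have "integral {0..1} (GG aa T) = - integral {0..1} (br aa T)"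
  proof -
    have i1: "aa T integrable_on {0..1}" using cont_slice[OF T] by (rule integrable_continuous_interval)
    have i2: "br aa T integrable_on {0..1}" using cont_brT[OF T] by (rule integrable_continuous_interval)
    have "GG aa T = (\<lambda>t. - (aa T t - mm aa T + br aa T t))" by (rule ext) (simp add: GG_def)
    then have "integral {0..1} (GG aa T) = - integral {0..1} (\<lambda>t. aa T t - mm aa T + br aa T t)"
      by (simp only: integral_neg)
    also have "integral {0..1} (\<lambda>t. aa T t - mm aa T + br aa T t) = integral {0..1} (aa T) - integral {0..1} (\<lambda>t::real. mm aa T) + integral {0..1} (br aa T)"
    proof -
      have i3: "(\<lambda>t::real. mm aa T) integrable_on {0..1}" by (rule integrable_continuous_interval) simp
      have "integral {0..1} (\<lambda>t. (aa T t - mm aa T) + br aa T t) = integral {0..1} (\<lambda>t. aa T t - mm aa T) + integral {0..1} (br aa T)"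
        by (rule integral_add[OF integrable_diff[OF i1 i3] i2])
      moreover have "integral {0..1} (\<lambda>t. aa T t - mm aa T) = integral {0..1} (aa T) - integral {0..1} (\<lambda>t::real. mm aa T)"
        using integral_diff[OF i1 i3] by simp
      ultimately show ?thesis by simp
    qed
    also have "\<dots> = integral {0..1} (br aa T)"
      by (simp add: integral_const_ivl mm_def)
    finally show ?thesis .
  qed
  ultimately show ?thesis by (simp add: cbox_interval mm_def[abs_def])
qed

lemma dd_deriv: "T \<ge> 0 \<Longrightarrow> t \<in> {0..1} \<Longrightarrow>
   ((\<lambda>T'. dd aa T' t) has_vector_derivative (- dd aa T t - br aa T t + integral {0..1} (br aa T))) (at T within {0..})"
proof -
  assume T: "T \<ge> 0" and t: "t \<in> {0..1}"
  have "((\<lambda>T'. aa T' t - mm aa T') has_vector_derivative GG aa T t - (- integral {0..1} (br aa T))) (at T within {0..})"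
    by (intro has_vector_derivative_diff GG_deriv mm_deriv T t)
  then show ?thesis by (simp add: dd_def[abs_def] GG_def algebra_simps)
qed

lemma kk_dd: "T \<ge> 0 \<Longrightarrow> t \<in> {0..1} \<Longrightarrow> kk aa T t = integral {0..t} (dd aa T)"
proof -
  assume T: "T \<ge> 0" and t: "t \<in> {0..1}"
  have "integral {0..t} (dd aa T) = integral {0..t} (aa T) - integral {0..t} (\<lambda>s::real. mm aa T)"
    unfolding dd_def
    by (rule integral_diff) (use t cont_slice[OF T] in \<open>auto intro!: integrable_continuous_interval intro: continuous_on_subset\<close>)
  also have "\<dots> = integral {0..t} (aa T) - t *\<^sub>R mm aa T"
    using t by (simp add: integral_const_ivl)
  finally show ?thesis using kk_eq[OF T t] by simp
qed

end

lemma exp_half_le: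
  fixes x y s :: real
  assumes "x * exp (s/2) \<le> y"
  shows "x \<le> y * exp (- (s/2))"
proof -
  have e: "exp (- (s/2)) = 1 / exp (s/2)" by (simp add: exp_minus inverse_eq_divide)
  show ?thesis using assms unfolding e by (simp add: pos_le_divide_eq)
qed

context flow
begin

definition good :: "real \<Rightarrow> bool" where
  "good s \<longleftrightarrow> (\<forall>t\<in>{0..1}. norm (dd aa s t) * exp (s/2) \<le> 1/100) \<and> norm (mm aa s) \<le> 1/200"

lemma good_bounds:
  assumes s: "s \<ge> 0" and g: "good s" and t: "t \<in> {0..1}"
  shows "norm (aa s t) \<le> 3/200" "norm (kk aa s t) * exp (s/2) \<le> 1/100"
    "norm (br aa s t) * exp (s/2) \<le> 3/10000"
    "norm (integral {0..1} (br aa s)) * exp (s/2) \<le> 3/10000"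
proof -
  define E where "E = exp (s/2)"
  have E1: "1 \<le> E" using s by (simp add: E_def)
  have Epos: "0 < E" by (simp add: E_def)
  have gd: "norm (dd aa s r) * E \<le> 1/100" if "r \<in> {0..1}" for r using g that by (simp add: good_def E_def)
  have gm: "norm (mm aa s) \<le> 1/200" using g by (simp add: good_def)
  have gd': "norm (dd aa s r) \<le> (1/100) / E" if "r \<in> {0..1}" for r
    using gd[OF that] Epos by (simp add: pos_le_divide_eq)
  have na: "norm (aa s r) \<le> 3/200" if r: "r \<in> {0..1}" for r
  proof -
    have "norm (dd aa s r) \<le> norm (dd aa s r) * E" using E1 by (simp add: mult_le_cancel_left1)
    then have "norm (dd aa s r) \<le> 1/100" using gd[OF r] by linarith
    moreover have "aa s r = dd aa s r + mm aa s" by (simp add: dd_def)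
    ultimately show ?thesis using gm norm_triangle_ineq[of "dd aa s r" "mm aa s"] by simp
  qed
  then show "norm (aa s t) \<le> 3/200" using t by simp
  have nk: "norm (kk aa s r) * E \<le> 1/100" if r: "r \<in> {0..1}" for r
  proof -
    have "norm (integral {0..r} (dd aa s)) \<le> ((1/100) / E) * (r - 0)"
    proof (rule integral_bound)
      show "continuous_on {0..r} (dd aa s)"
        by (rule continuous_on_subset[OF cont_ddT[OF s]]) (use r in auto)
      show "norm (dd aa s x) \<le> (1/100) / E" if "x \<in> {0..r}" for x using gd' that r by auto
    qed (use r in auto)
    also have "\<dots> \<le> (1/100) / E" by (rule mult_right_le_one_le) (use r Epos in auto)
    finally show ?thesis using kk_dd[OF s r] Epos by (simp add: pos_le_divide_eq)
  qed
  then show "norm (kk aa s t) * exp (s/2) \<le> 1/100" using t by (simp add: E_def)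
  have nb: "norm (br aa s r) * E \<le> 3/10000" if r: "r \<in> {0..1}" for r
  proof -
    have "norm (br aa s r) * E \<le> 2 * norm (aa s r) * norm (kk aa s r) * E"
      unfolding br_def using norm_bracket Epos by (intro mult_right_mono) auto
    also have "\<dots> = 2 * norm (aa s r) * (norm (kk aa s r) * E)" by simp
    also have "\<dots> \<le> 2 * (3/200) * (1/100)"
      using na[OF r] nk[OF r] Epos by (intro mult_mono) auto
    finally show ?thesis by simp
  qed
  then show "norm (br aa s t) * exp (s/2) \<le> 3/10000" using t by (simp add: E_def)
  have "norm (integral {0..1} (br aa s)) \<le> ((3/10000) / E) * (1 - 0)"
  proof (rule integral_bound)
    show "continuous_on {0..1} (br aa s)" by (rule cont_brT[OF s])
    show "norm (br aa s x) \<le> (3/10000) / E" if "x \<in> {0..1}" for x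
      using nb[OF that] Epos by (simp add: pos_le_divide_eq)
  qed auto
  then show "norm (integral {0..1} (br aa s)) * exp (s/2) \<le> 3/10000"
    using Epos by (simp add: E_def pos_le_divide_eq)
qed

lemma improve:
  assumes init_d: "\<And>t. t \<in> {0..1} \<Longrightarrow> norm (dd aa 0 t) \<le> 1/200"
    and init_m: "norm (mm aa 0) \<le> 1/400"
    and T: "T \<ge> 0" and hyp: "\<And>s. s \<in> {0..T} \<Longrightarrow> good s"
  shows "\<And>t. t \<in> {0..1} \<Longrightarrow> norm (dd aa T t) * exp (T/2) \<le> 8/1000"
    and "norm (mm aa T) \<le> 4/1000"
proof -
  have "norm (mm aa T - mm aa 0) \<le> (- (6/10000) * exp (- (T/2))) - (- (6/10000) * exp (- (0/2)))"
  proof (rule norm_diff_le_majorant[where f' = "\<lambda>s. - integral {0..1} (br aa s)" and g' = "\<lambda>s. (3/10000) * exp (- (s/2))"])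
    fix s assume s: "s \<in> {0..T}"
    show "(mm aa has_vector_derivative - integral {0..1} (br aa s)) (at s within {0..T})"
      by (rule has_vector_derivative_within_subset[OF mm_deriv]) (use s in auto)
    show "((\<lambda>s. - (6/10000) * exp (- (s/2))) has_real_derivative (3/10000) * exp (- (s/2))) (at s within {0..T})"
      by (auto intro!: derivative_eq_intros)
    have "norm (integral {0..1} (br aa s)) * exp (s/2) \<le> 3/10000"
      using good_bounds(4)[of s 0] s hyp[OF s] by auto
    then show "norm (- integral {0..1} (br aa s)) \<le> (3/10000) * exp (- (s/2))"
      using exp_half_le by simp
  qed (use T in auto)
  then have "norm (mm aa T - mm aa 0) \<le> 6/10000 - (6/10000) * exp (- (T/2))" by simp
  moreover have "exp (- (T/2)) > 0" by simp
  ultimately have "norm (mm aa T - mm aa 0) \<le> 6/10000" by linarith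
  then show "norm (mm aa T) \<le> 4/1000"
    using init_m norm_triangle_ineq[of "mm aa T - mm aa 0" "mm aa 0"] by simp
next
  fix t :: real assume t: "t \<in> {0..1}"
  have "norm (exp T *\<^sub>R dd aa T t - exp 0 *\<^sub>R dd aa 0 t) \<le> (12/10000) * exp (T/2) - (12/10000) * exp (0/2)"
  proof (rule norm_diff_le_majorant[where f' = "\<lambda>s. exp s *\<^sub>R (- br aa s t + integral {0..1} (br aa s))" and g' = "\<lambda>s. (6/10000) * exp (s/2)"])
    fix s assume s: "s \<in> {0..T}"
    have dd': "((\<lambda>s. dd aa s t) has_vector_derivative (- dd aa s t - br aa s t + integral {0..1} (br aa s))) (at s within {0..T})"
      by (rule has_vector_derivative_within_subset[OF dd_deriv]) (use s t in auto)
    have ex: "(exp has_real_derivative exp s) (at s within {0..T})"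
      by (auto intro!: derivative_eq_intros)
    have "((\<lambda>s. exp s *\<^sub>R dd aa s t) has_vector_derivative exp s *\<^sub>R (- dd aa s t - br aa s t + integral {0..1} (br aa s)) + exp s *\<^sub>R dd aa s t) (at s within {0..T})"
      by (rule has_vector_derivative_scaleR[OF ex dd'])
    then show "((\<lambda>s. exp s *\<^sub>R dd aa s t) has_vector_derivative exp s *\<^sub>R (- br aa s t + integral {0..1} (br aa s))) (at s within {0..T})"
      by (simp add: algebra_simps)
    show "((\<lambda>s. (12/10000) * exp (s/2)) has_real_derivative (6/10000) * exp (s/2)) (at s within {0..T})"
      by (auto intro!: derivative_eq_intros)
    have s0: "s \<ge> 0" using s by simp
    have b1: "norm (br aa s t) \<le> (3/10000) * exp (- (s/2))"
      using good_bounds(3)[OF s0 hyp[OF s] t] exp_half_le by simp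
    have b2: "norm (integral {0..1} (br aa s)) \<le> (3/10000) * exp (- (s/2))"
      using good_bounds(4)[OF s0 hyp[OF s] t] exp_half_le by simp
    have "norm (exp s *\<^sub>R (- br aa s t + integral {0..1} (br aa s))) = exp s * norm (- br aa s t + integral {0..1} (br aa s))"
      by simp
    also have "\<dots> \<le> exp s * ((6/10000) * exp (- (s/2)))"
      using b1 b2 norm_triangle_ineq[of "- br aa s t" "integral {0..1} (br aa s)"]
      by (intro mult_left_mono) auto
    also have "\<dots> = (6/10000) * (exp s * exp (- (s/2)))" by simp
    also have "exp s * exp (- (s/2)) = exp (s/2)" by (simp add: exp_add[symmetric])
    finally show "norm (exp s *\<^sub>R (- br aa s t + integral {0..1} (br aa s))) \<le> (6/10000) * exp (s/2)" .
  qed (use T in auto)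
  then have A: "norm (exp T *\<^sub>R dd aa T t - dd aa 0 t) \<le> (12/10000) * exp (T/2) - 12/10000" by simp
  define E where "E = exp (T/2)"
  have E1: "1 \<le> E" using T by (simp add: E_def)
  have eT: "exp T = E * E" by (simp add: E_def exp_add[symmetric])
  have "exp T * norm (dd aa T t) \<le> norm (exp T *\<^sub>R dd aa T t - dd aa 0 t) + norm (dd aa 0 t)"
    using norm_triangle_ineq[of "exp T *\<^sub>R dd aa T t - dd aa 0 t" "dd aa 0 t"] by simp
  also have "\<dots> \<le> ((12/10000) * E - 12/10000) + 1/200"
    using A init_d[OF t] by (simp add: E_def)
  also have "\<dots> \<le> (62/10000) * E" using E1 by simp
  finally have "(norm (dd aa T t) * E) * E \<le> (62/10000) * E" using eT by (simp add: algebra_simps)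
  then have "norm (dd aa T t) * E \<le> 62/10000" using E1 by (simp add: mult_le_cancel_right)
  then show "norm (dd aa T t) * exp (T/2) \<le> 8/1000" by (simp add: E_def)
qed

lemma all_good:
  assumes init_d: "\<And>t. t \<in> {0..1} \<Longrightarrow> norm (dd aa 0 t) \<le> 1/200"
    and init_m: "norm (mm aa 0) \<le> 1/400"
    and T: "T \<ge> 0"
  shows "good T"
proof -
  define F where "F s t = max (norm (dd aa s t) * exp (s/2) * 100) (norm (mm aa s) * 200)" for s t
  have Fgood: "good s \<longleftrightarrow> (\<forall>t\<in>{0..1}. F s t \<le> 1)" for s
  proof
    assume "good s" then show "\<forall>t\<in>{0..1}. F s t \<le> 1" by (auto simp: good_def F_def)
  next
    assume a: "\<forall>t\<in>{0..1}. F s t \<le> 1"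
    then have "F s 0 \<le> 1" by simp
    then show "good s" using a by (auto simp: good_def F_def)
  qed
  have contF: "continuous_on ({0..} \<times> {0..1}) (\<lambda>(s, t). F s t)"
  proof -
    have c1: "continuous_on ({0..} \<times> {0..1}) (\<lambda>p. dd aa (fst p) (snd p))"
      using cont_dd by (simp add: split_beta)
    show ?thesis unfolding F_def split_beta
      using c1 cont_mm' by (intro continuous_intros) auto
  qed
  have "\<forall>t\<in>{0..1}. F T t \<le> 1"
  proof
    fix t :: real assume t: "t \<in> {0..1}"
    show "F T t \<le> 1"
    proof (rule cont_induction[OF contF, where c = "4/5"])
      show "F 0 t \<le> 1" if "t \<in> {0..1}" for t
        using init_d[OF that] init_m by (simp add: F_def)
      show "F T' t \<le> 4/5" if T': "T' \<ge> 0" and hyp: "\<And>s t. s \<in> {0..T'} \<Longrightarrow> t \<in> {0..1} \<Longrightarrow> F s t \<le> 1"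
        and t: "t \<in> {0..1}" for T' t
      proof -
        have g: "good s" if "s \<in> {0..T'}" for s using hyp that Fgood by blast
        show ?thesis using improve(1)[OF init_d init_m T' g t] improve(2)[OF init_d init_m T' g]
          by (simp add: F_def)
      qed
    qed (use T t in auto)
  qed
  then show ?thesis using Fgood by blast
qed

end

locale flow_small = flow +
  assumes init_d: "\<And>t. t \<in> {0..1} \<Longrightarrow> norm (dd aa 0 t) \<le> 1/200"
    and init_m: "norm (mm aa 0) \<le> 1/400"
begin

lemma good_all: "T \<ge> 0 \<Longrightarrow> good T"
  using all_good[OF init_d init_m] .

lemma bnd_aa: "T \<ge> 0 \<Longrightarrow> t \<in> {0..1} \<Longrightarrow> norm (aa T t) \<le> 3/200"
  using good_bounds(1)[OF _ good_all] by blast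

lemma bnd_kk: "T \<ge> 0 \<Longrightarrow> t \<in> {0..1} \<Longrightarrow> norm (kk aa T t) \<le> 1/100"
proof -
  assume T: "T \<ge> 0" and t: "t \<in> {0..1}"
  have "norm (kk aa T t) * exp (T/2) \<le> 1/100" using good_bounds(2)[OF T good_all[OF T] t] .
  moreover have "norm (kk aa T t) \<le> norm (kk aa T t) * exp (T/2)"
    using T by (simp add: mult_le_cancel_left1)
  ultimately show ?thesis by linarith
qed

lemma bnd_mm: "T \<ge> 0 \<Longrightarrow> norm (mm aa T) \<le> 1/200"
  using good_all by (simp add: good_def)

lemma bnd_dd: "T \<ge> 0 \<Longrightarrow> t \<in> {0..1} \<Longrightarrow> norm (dd aa T t) \<le> (1/100) * exp (- (T/2))"
proof -
  assume T: "T \<ge> 0" and t: "t \<in> {0..1}"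
  have "norm (dd aa T t) * exp (T/2) \<le> 1/100" using good_all[OF T] t by (simp add: good_def)
  then show ?thesis by (rule exp_half_le)
qed

lemma mm_cauchy:
  assumes T1: "0 \<le> T1" and T12: "T1 \<le> T2"
  shows "norm (mm aa T2 - mm aa T1) \<le> (6/10000) * exp (- (T1/2))"
proof -
  have "norm (mm aa T2 - mm aa T1) \<le> (- (6/10000) * exp (- (T2/2))) - (- (6/10000) * exp (- (T1/2)))"
  proof (rule norm_diff_le_majorant[where f' = "\<lambda>s. - integral {0..1} (br aa s)" and g' = "\<lambda>s. (3/10000) * exp (- (s/2))"])
    fix s assume s: "s \<in> {T1..T2}"
    then have s0: "s \<ge> 0" using T1 by simp
    show "(mm aa has_vector_derivative - integral {0..1} (br aa s)) (at s within {T1..T2})"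
      by (rule has_vector_derivative_within_subset[OF mm_deriv[OF s0]]) (use T1 in auto)
    show "((\<lambda>s. - (6/10000) * exp (- (s/2))) has_real_derivative (3/10000) * exp (- (s/2))) (at s within {T1..T2})"
      by (auto intro!: derivative_eq_intros)
    have "norm (integral {0..1} (br aa s)) * exp (s/2) \<le> 3/10000"
      using good_bounds(4)[OF s0 good_all[OF s0], of 0] by auto
    then show "norm (- integral {0..1} (br aa s)) \<le> (3/10000) * exp (- (s/2))"
      using exp_half_le by simp
  qed (use T12 in auto)
  moreover have "exp (- (T2/2)) > 0" by simp
  ultimately show ?thesis by linarith
qed

lemma mm_lim:
  obtains c where "norm c \<le> 1/200" "\<And>T. T \<ge> 0 \<Longrightarrow> norm (mm aa T - c) \<le> (6/10000) * exp (- (T/2))"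
proof -
  define X where "X n = mm aa (real n)" for n :: nat
  have lim0: "(\<lambda>n::nat. (6/10000) * exp (- (real n/2))) \<longlonglongrightarrow> 0" by real_asymp
  have "Cauchy X"
  proof (rule metric_CauchyI)
    fix e :: real assume e: "e > 0"
    have "\<forall>\<^sub>F n in sequentially. (6/10000) * exp (- (real n/2)) < e/2"
      by (rule order_tendstoD(2)[OF lim0]) (use e in simp)
    then obtain N where N: "\<And>n. n \<ge> N \<Longrightarrow> (6/10000) * exp (- (real n/2)) < e/2"
      unfolding eventually_sequentially by blast
    show "\<exists>M. \<forall>m\<ge>M. \<forall>n\<ge>M. dist (X m) (X n) < e"
    proof (intro exI allI impI)
      fix m n assume m: "m \<ge> N" and n: "n \<ge> N"
      have "norm (X m - X N) \<le> (6/10000) * exp (- (real N/2))"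
        unfolding X_def by (rule mm_cauchy) (use m in auto)
      moreover have "norm (X n - X N) \<le> (6/10000) * exp (- (real N/2))"
        unfolding X_def by (rule mm_cauchy) (use n in auto)
      moreover have "dist (X m) (X n) \<le> norm (X m - X N) + norm (X n - X N)"
        using norm_triangle_ineq4[of "X m - X N" "X n - X N"] by (simp add: dist_norm)
      ultimately show "dist (X m) (X n) < e" using N[of N] by simp
    qed
  qed
  then obtain c where c: "X \<longlonglongrightarrow> c" using Cauchy_convergent_iff convergent_def by blast
  show ?thesis
  proof (rule that)
    show "norm c \<le> 1/200"
      by (rule LIMSEQ_le_const2[OF tendsto_norm[OF c]]) (use bnd_mm in \<open>auto simp: X_def\<close>)
    fix T :: real assume T: "T \<ge> 0"
    have "norm (c - mm aa T) \<le> (6/10000) * exp (- (T/2))"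
    proof (rule LIMSEQ_le_const2[OF tendsto_norm[OF tendsto_diff[OF c tendsto_const]]])
      show "\<exists>N. \<forall>n\<ge>N. norm (X n - mm aa T) \<le> (6/10000) * exp (- (T/2))"
      proof (intro exI allI impI)
        fix n assume "n \<ge> nat \<lceil>T\<rceil>"
        then have "real n \<ge> T" by linarith
        then show "norm (X n - mm aa T) \<le> (6/10000) * exp (- (T/2))"
          unfolding X_def by (rule mm_cauchy[OF T])
      qed
    qed
    then show "norm (mm aa T - c) \<le> (6/10000) * exp (- (T/2))" by (simp add: norm_minus_commute)
  qed
qed

end

context flow_small
begin

lemma bnd_aa4: "T \<ge> 0 \<Longrightarrow> t \<in> {0..1} \<Longrightarrow> norm (aa T t) \<le> 1/4"
  using bnd_aa[of T t] by linarith

lemma bnd_aa2: "T \<ge> 0 \<Longrightarrow> t \<in> {0..1} \<Longrightarrow> norm (aa T t) \<le> 1/2"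
  using bnd_aa[of T t] by linarith

definition Uf :: "real \<Rightarrow> real \<Rightarrow> 'a" where
  "Uf T = (SOME U. is_trans (aa T) U)"

lemma Uf_trans: "T \<ge> 0 \<Longrightarrow> is_trans (aa T) (Uf T)"
proof -
  assume T: "T \<ge> 0"
  have "\<exists>U. is_trans (aa T) U"
    by (rule trans_exists[OF cont_slice[OF T]]) (rule bnd_aa2[OF T])
  then show ?thesis unfolding Uf_def by (rule someI_ex)
qed

lemma Uf_bound:
  assumes T: "T \<ge> 0" and t: "t \<in> {0..1}" shows "norm (Uf T t) \<le> 4/3"
  by (rule trans_bound[OF bnd_aa4[OF T] Uf_trans[OF T] t])

lemma diffq:
  assumes T: "T \<ge> 0" and e1: "e1 > 0"
  shows "\<exists>r>0. \<forall>S\<ge>0. \<bar>S - T\<bar> < r \<longrightarrow> (\<forall>s\<in>{0..1}. norm (aa S s - aa T s - (S - T) *\<^sub>R GG aa T s) \<le> e1 * \<bar>S - T\<bar>)"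
proof -
  obtain r where r: "r > 0" "\<And>x s. x \<in> {0..} \<Longrightarrow> \<bar>x - T\<bar> < r \<Longrightarrow> s \<in> {0..1} \<Longrightarrow> dist (GG aa x s) (GG aa T s) \<le> e1"
    using prod_near[OF cont_GG _ e1, of T] T by auto
  show ?thesis
  proof (intro exI[of _ r] conjI allI impI ballI)
    show "r > 0" by (rule r(1))
    fix S s :: real assume S: "S \<ge> 0" and ST: "\<bar>S - T\<bar> < r" and s: "s \<in> {0..1}"
    define f where "f \<sigma> = aa \<sigma> s - \<sigma> *\<^sub>R GG aa T s" for \<sigma>
    have fd: "(f has_vector_derivative GG aa \<sigma> s - GG aa T s) (at \<sigma> within {a..b})"
      if "\<sigma> \<in> {a..b}" "a \<ge> 0" for \<sigma> a b
    proof -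
      have "((\<lambda>\<sigma>. aa \<sigma> s - \<sigma> *\<^sub>R GG aa T s) has_vector_derivative GG aa \<sigma> s - 1 *\<^sub>R GG aa T s) (at \<sigma> within {0..})"
        using GG_deriv[of \<sigma> s] that s by (intro derivative_eq_intros) auto
      then have "((\<lambda>\<sigma>. aa \<sigma> s - \<sigma> *\<^sub>R GG aa T s) has_vector_derivative GG aa \<sigma> s - GG aa T s) (at \<sigma> within {0..})"
        by simp
      then show ?thesis unfolding f_def
        by (rule has_vector_derivative_within_subset) (use that in auto)
    qed
    have fb: "norm (GG aa \<sigma> s - GG aa T s) \<le> e1" if "\<sigma> \<ge> 0" "\<bar>\<sigma> - T\<bar> < r" for \<sigma>
      using r(2)[of \<sigma> s] that s by (simp add: dist_norm)
    have eq: "f S - f T = aa S s - aa T s - (S - T) *\<^sub>R GG aa T s"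
      by (simp add: f_def algebra_simps)
    show "norm (aa S s - aa T s - (S - T) *\<^sub>R GG aa T s) \<le> e1 * \<bar>S - T\<bar>"
    proof (cases "T \<le> S")
      case True
      have "norm (f S - f T) \<le> e1 * S - e1 * T"
      proof (rule norm_diff_le_majorant[where f' = "\<lambda>\<sigma>. GG aa \<sigma> s - GG aa T s" and g' = "\<lambda>_. e1"])
        fix \<sigma> assume \<sigma>: "\<sigma> \<in> {T..S}"
        show "(f has_vector_derivative GG aa \<sigma> s - GG aa T s) (at \<sigma> within {T..S})" by (rule fd[OF \<sigma> T])
        show "((*) e1 has_real_derivative e1) (at \<sigma> within {T..S})" by (auto intro!: derivative_eq_intros)
        show "norm (GG aa \<sigma> s - GG aa T s) \<le> e1" by (rule fb) (use \<sigma> T ST True in auto)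
      qed (use True in auto)
      then show ?thesis using True eq by (simp add: algebra_simps)
    next
      case False
      have "norm (f T - f S) \<le> e1 * T - e1 * S"
      proof (rule norm_diff_le_majorant[where f' = "\<lambda>\<sigma>. GG aa \<sigma> s - GG aa T s" and g' = "\<lambda>_. e1"])
        fix \<sigma> assume \<sigma>: "\<sigma> \<in> {S..T}"
        show "(f has_vector_derivative GG aa \<sigma> s - GG aa T s) (at \<sigma> within {S..T})" by (rule fd[OF \<sigma> S])
        show "((*) e1 has_real_derivative e1) (at \<sigma> within {S..T})" by (auto intro!: derivative_eq_intros)
        show "norm (GG aa \<sigma> s - GG aa T s) \<le> e1" by (rule fb) (use \<sigma> S ST False in auto)
      qed (use False in auto)
      then show ?thesis using False eq by (simp add: algebra_simps norm_minus_commute)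
    qed
  qed
qed

end

context flow_small
begin

lemma kk_deriv:
  assumes T: "T \<ge> 0" and t: "t \<in> {0..1}"
  shows "(kk aa T has_vector_derivative (aa T t - mm aa T)) (at t within {0..1})"
proof -
  have "kk aa T = kappaA (aa T)" by (rule ext) (simp add: kk_def)
  then show ?thesis using kappa_deriv[OF cont_slice[OF T] t] by (simp add: mm_def)
qed

lemma kk_01: "T \<ge> 0 \<Longrightarrow> kk aa T 0 = 0 \<and> kk aa T 1 = 0"
  using kappa_0[OF cont_slice] by (simp add: kk_def)

lemma cons_local:
  assumes T: "T \<ge> 0" and e: "e > 0"
  shows "\<exists>r>0. \<forall>S\<ge>0. \<bar>S - T\<bar> < r \<longrightarrow> norm (Uf S 1 - Uf T 1) \<le> e * \<bar>S - T\<bar>"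
proof -
  obtain r1 where r1: "r1 > 0" "\<And>S. S \<ge> 0 \<Longrightarrow> \<bar>S - T\<bar> < r1 \<Longrightarrow> (\<forall>s\<in>{0..1}. norm (aa S s - aa T s - (S - T) *\<^sub>R GG aa T s) \<le> (e/4) * \<bar>S - T\<bar>)"
    using diffq[OF T, of "e/4"] e by auto
  obtain r2 where r2: "r2 > 0" "\<And>x s. x \<in> {0..} \<Longrightarrow> \<bar>x - T\<bar> < r2 \<Longrightarrow> s \<in> {0..1} \<Longrightarrow> dist (aa x s) (aa T s) \<le> e/4"
    using prod_near[OF cont _, of T "e/4"] T e by auto
  show ?thesis
  proof (intro exI[of _ "min r1 r2"] conjI allI impI)
    show "min r1 r2 > 0" using r1 r2 by simp
    fix S :: real assume S: "S \<ge> 0" and ST: "\<bar>S - T\<bar> < min r1 r2"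
    define \<delta> where "\<delta> = \<bar>S - T\<bar>"
    have \<delta>0: "\<delta> \<ge> 0" by (simp add: \<delta>_def)
    have dq: "norm (aa S s - aa T s - (S - T) *\<^sub>R GG aa T s) \<le> (e/4) * \<delta>" if "s \<in> {0..1}" for s
      using r1(2)[OF S] ST that by (simp add: \<delta>_def)
    have cl: "norm (aa S s - aa T s) \<le> e/4" if "s \<in> {0..1}" for s
      using r2(2)[of S s] S ST that by (simp add: dist_norm)
    define Z where "Z t = Uf S t - Uf T t - (S - T) *\<^sub>R (kk aa T t * Uf T t)" for t
    define Z' where "Z' t = - (aa S t * Z t) - (S - T) *\<^sub>R ((aa S t - aa T t) * (kk aa T t * Uf T t))
        - (aa S t - aa T t - (S - T) *\<^sub>R GG aa T t) * Uf T t" for t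
    have US: "is_trans (aa S) (Uf S)" by (rule Uf_trans[OF S])
    have UT: "is_trans (aa T) (Uf T)" by (rule Uf_trans[OF T])
    have "norm (Z t) \<le> (\<delta> * e * (7/12)) / (1 - 1/4)" if t: "t \<in> {0..1}" for t
    proof (rule small_gronwall[where f = Z and f' = Z' and q = "1/4", OF _ _ _ _ _ _ t])
      show "Z 0 = 0" using US UT kk_01[OF T] by (simp add: Z_def is_trans_def)
      fix s :: real assume s: "s \<in> {0..1}"
      have d1: "(Uf S has_vector_derivative - (aa S s * Uf S s)) (at s within {0..1})"
        using US s by (simp add: is_trans_def)
      have d2: "(Uf T has_vector_derivative - (aa T s * Uf T s)) (at s within {0..1})"
        using UT s by (simp add: is_trans_def)
      have d3: "((\<lambda>t. kk aa T t * Uf T t) has_vector_derivative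
          (kk aa T s * (- (aa T s * Uf T s)) + (aa T s - mm aa T) * Uf T s)) (at s within {0..1})"
        by (rule has_vector_derivative_mult[OF kk_deriv[OF T s] d2])
      have d4: "((\<lambda>t. (S - T) *\<^sub>R (kk aa T t * Uf T t)) has_vector_derivative
          (S - T) *\<^sub>R (kk aa T s * (- (aa T s * Uf T s)) + (aa T s - mm aa T) * Uf T s)) (at s within {0..1})"
        by (rule bounded_linear.has_vector_derivative[OF bounded_linear_scaleR_right d3])
      have "(Z has_vector_derivative (- (aa S s * Uf S s)) - (- (aa T s * Uf T s))
          - (S - T) *\<^sub>R (kk aa T s * (- (aa T s * Uf T s)) + (aa T s - mm aa T) * Uf T s)) (at s within {0..1})"
        unfolding Z_def[abs_def] by (intro has_vector_derivative_diff d1 d2 d4)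
      moreover have "(- (aa S s * Uf S s)) - (- (aa T s * Uf T s))
          - (S - T) *\<^sub>R (kk aa T s * (- (aa T s * Uf T s)) + (aa T s - mm aa T) * Uf T s) = Z' s"
        unfolding Z'_def Z_def GG_def br_def lie_bracket_def by (simp add: algebra_simps)
      ultimately show "(Z has_vector_derivative Z' s) (at s within {0..1})" by simp
      have n1: "norm (aa S s * Z s) \<le> 1/4 * norm (Z s)"
        using norm_mult_ineq[of "aa S s" "Z s"] bnd_aa4[OF S s] by (meson mult_right_mono norm_ge_zero order_trans)
      have "norm ((aa S s - aa T s) * (kk aa T s * Uf T s)) \<le> norm (aa S s - aa T s) * (norm (kk aa T s) * norm (Uf T s))"
        by (metis mult_left_mono norm_ge_zero norm_mult_ineq order_trans)
      also have "\<dots> \<le> (e/4) * ((1/100) * (4/3))"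
        using cl[OF s] bnd_kk[OF T s] Uf_bound[OF T s] e by (intro mult_mono) auto
      finally have n2a: "norm ((aa S s - aa T s) * (kk aa T s * Uf T s)) \<le> (e/4) * ((1/100) * (4/3))" .
      have "norm ((S - T) *\<^sub>R ((aa S s - aa T s) * (kk aa T s * Uf T s))) = \<delta> * norm ((aa S s - aa T s) * (kk aa T s * Uf T s))"
        by (simp add: \<delta>_def)
      also have "\<dots> \<le> \<delta> * ((e/4) * ((1/100) * (4/3)))" by (rule mult_left_mono[OF n2a \<delta>0])
      finally have n2: "norm ((S - T) *\<^sub>R ((aa S s - aa T s) * (kk aa T s * Uf T s))) \<le> \<delta> * ((e/4) * ((1/100) * (4/3)))" .
      have "norm ((aa S s - aa T s - (S - T) *\<^sub>R GG aa T s) * Uf T s) \<le> norm (aa S s - aa T s - (S - T) *\<^sub>R GG aa T s) * norm (Uf T s)"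
        by (rule norm_mult_ineq)
      also have "\<dots> \<le> ((e/4) * \<delta>) * (4/3)"
        using dq[OF s] Uf_bound[OF T s] e \<delta>0 by (intro mult_mono) auto
      finally have n3: "norm ((aa S s - aa T s - (S - T) *\<^sub>R GG aa T s) * Uf T s) \<le> ((e/4) * \<delta>) * (4/3)" .
      have "norm (Z' s) \<le> norm (aa S s * Z s) + norm ((S - T) *\<^sub>R ((aa S s - aa T s) * (kk aa T s * Uf T s)))
          + norm ((aa S s - aa T s - (S - T) *\<^sub>R GG aa T s) * Uf T s)"
        unfolding Z'_def by (rule order_trans[OF norm_triangle_ineq4 add_right_mono[OF order_trans[OF norm_triangle_ineq4]]]) simp
      also have "\<dots> \<le> 1/4 * norm (Z s) + \<delta> * ((e/4) * ((1/100) * (4/3))) + ((e/4) * \<delta>) * (4/3)"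
        using n1 n2 n3 by linarith
      also have "\<dots> \<le> 1/4 * norm (Z s) + \<delta> * e * (7/12)"
        using e \<delta>0 by (simp add: algebra_simps)
      finally show "norm (Z' s) \<le> 1/4 * norm (Z s) + \<delta> * e * (7/12)" .
    qed (use e \<delta>0 in auto)
    from this[of 1] have "norm (Z 1) \<le> \<delta> * e * (7/9)" by simp
    moreover have "Z 1 = Uf S 1 - Uf T 1" using kk_01[OF T] by (simp add: Z_def)
    ultimately have A: "norm (Uf S 1 - Uf T 1) \<le> \<delta> * e * (7/9)" by simp
    have "\<delta> * e * (7/9) \<le> \<delta> * e" by (rule mult_right_le_one_le) (use e \<delta>0 in auto)
    also have "\<delta> * e = e * \<bar>S - T\<bar>" by (simp add: \<delta>_def mult.commute)
    finally show "norm (Uf S 1 - Uf T 1) \<le> e * \<bar>S - T\<bar>" using A by linarith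
  qed
qed

lemma cons:
  assumes T: "T \<ge> 0"
  shows "Uf T 1 = Uf 0 1"
proof -
  have "\<exists>c. \<forall>x\<in>{0..}. Uf x 1 = c"
  proof (rule has_derivative_zero_constant)
    fix x :: real assume x: "x \<in> {0..}"
    show "((\<lambda>x. Uf x 1) has_derivative (\<lambda>h. 0)) (at x within {0..})"
      unfolding has_derivative_within_alt
    proof (intro conjI allI impI)
      show "bounded_linear (\<lambda>h::real. 0::'a)" by simp
      fix e :: real assume e: "e > 0"
      obtain r where r: "r > 0" "\<forall>S\<ge>0. \<bar>S - x\<bar> < r \<longrightarrow> norm (Uf S 1 - Uf x 1) \<le> e * \<bar>S - x\<bar>"
        using cons_local[of x e] x e by auto
      show "\<exists>d>0. \<forall>y\<in>{0..}. norm (y - x) < d \<longrightarrow> norm (Uf y 1 - Uf x 1 - 0) \<le> e * norm (y - x)"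
        using r by (intro exI[of _ r]) auto
    qed
  qed simp
  then show ?thesis using T by force
qed

end

theorem mainTheorem12:
  fixes a :: "real \<Rightarrow> 'a::{real_normed_algebra_1,banach}"
  assumes "continuous_on {0..1} a"
  shows "\<forall>\<^sub>F \<epsilon> in nhds 0.
    \<forall>aa :: real \<Rightarrow> real \<Rightarrow> 'a.
      (\<forall>t\<in>{0..1}. aa 0 t = \<epsilon> *\<^sub>R a t)
      \<and> continuous_on ({0..} \<times> {0..1}) (\<lambda>(T, t). aa T t)
      \<and> (\<forall>T\<ge>0. \<forall>t\<in>{0..1}.
           ((\<lambda>T'. aa T' t) has_vector_derivative
              (- covd (aa T) (kappaA (aa T)) t)) (at T within {0..}))
      \<longrightarrow> ((\<lambda>T. integral {0..1} (aa T))
            \<longlongrightarrow> - alg_log (pexp_neg (\<lambda>t. \<epsilon> *\<^sub>R a t))) at_top"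
proof -
  note ca = assms
  obtain t0 where t0: "t0 \<in> {0..1}" "\<And>t. t \<in> {0..1} \<Longrightarrow> norm (a t) \<le> norm (a t0)"
    using sup_attained[OF _ ca] by auto
  define B where "B = norm (a t0)"
  have B0: "B \<ge> 0" by (simp add: B_def)
  have aB: "norm (a t) \<le> B" if "t \<in> {0..1}" for t using t0(2)[OF that] by (simp add: B_def)
  have ev: "\<forall>\<^sub>F \<epsilon> in nhds 0. \<bar>\<epsilon>\<bar> * (B + 1) \<le> 1/400"
    unfolding eventually_nhds_metric_le
  proof (intro exI[of _ "1 / (400 * (B + 1))"] conjI allI impI)
    show "1 / (400 * (B + 1)) > 0" using B0 by simp
    fix \<epsilon> :: real assume "dist \<epsilon> 0 \<le> 1 / (400 * (B + 1))"
    then have "\<bar>\<epsilon>\<bar> \<le> 1 / (400 * (B + 1))" by simp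
    then show "\<bar>\<epsilon>\<bar> * (B + 1) \<le> 1/400" using B0 by (simp add: field_simps)
  qed
  show ?thesis
  proof (rule eventually_mono[OF ev], intro allI impI)
    fix \<epsilon> :: real and aa :: "real \<Rightarrow> real \<Rightarrow> 'a"
    assume \<epsilon>: "\<bar>\<epsilon>\<bar> * (B + 1) \<le> 1/400"
    assume H: "(\<forall>t\<in>{0..1}. aa 0 t = \<epsilon> *\<^sub>R a t)
      \<and> continuous_on ({0..} \<times> {0..1}) (\<lambda>(T, t). aa T t)
      \<and> (\<forall>T\<ge>0. \<forall>t\<in>{0..1}.
           ((\<lambda>T'. aa T' t) has_vector_derivative
              (- covd (aa T) (kappaA (aa T)) t)) (at T within {0..}))"
    have init: "\<And>t. t \<in> {0..1} \<Longrightarrow> aa 0 t = \<epsilon> *\<^sub>R a t" using H by auto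
    interpret flow aa
      by unfold_locales (use H in auto)
    have eB: "\<bar>\<epsilon>\<bar> * B \<le> 1/400" using \<epsilon> B0 by (smt (verit) mult_left_mono abs_ge_zero distrib_left mult.right_neutral)
    have ea: "norm (\<epsilon> *\<^sub>R a t) \<le> 1/400" if "t \<in> {0..1}" for t
    proof -
      have "norm (\<epsilon> *\<^sub>R a t) = \<bar>\<epsilon>\<bar> * norm (a t)" by simp
      also have "\<dots> \<le> \<bar>\<epsilon>\<bar> * B" by (rule mult_left_mono[OF aB[OF that]]) simp
      finally show ?thesis using eB by linarith
    qed
    have cea: "continuous_on {0..1} (\<lambda>t. \<epsilon> *\<^sub>R a t)" using ca by (intro continuous_intros)
    have m0: "mm aa 0 = integral {0..1} (\<lambda>t. \<epsilon> *\<^sub>R a t)"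
      unfolding mm_def by (rule integral_cong) (use init in auto)
    have nm0: "norm (mm aa 0) \<le> 1/400"
    proof -
      have "norm (integral {0..1} (\<lambda>t. \<epsilon> *\<^sub>R a t)) \<le> 1/400 * (1 - 0)"
        by (rule integral_bound[OF _ cea]) (use ea in auto)
      then show ?thesis using m0 by simp
    qed
    have nd0: "norm (dd aa 0 t) \<le> 1/200" if t: "t \<in> {0..1}" for t
    proof -
      have "norm (dd aa 0 t) \<le> norm (aa 0 t) + norm (mm aa 0)"
        unfolding dd_def by (rule norm_triangle_ineq4)
      also have "\<dots> \<le> 1/400 + 1/400" using ea[OF t] init[OF t] nm0 by simp
      finally show ?thesis by simp
    qed
    interpret flow_small aa
      by unfold_locales (use nd0 nm0 in auto)
    obtain c where c: "norm c \<le> 1/200" "\<And>T. T \<ge> 0 \<Longrightarrow> norm (mm aa T - c) \<le> (6/10000) * exp (- (T/2))"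
      using mm_lim by blast
    have close: "norm (aa T t - c) \<le> (2/100) * exp (- (T/2))" if T: "T \<ge> 0" and t: "t \<in> {0..1}" for T t
    proof -
      have eq: "aa T t - c = dd aa T t + (mm aa T - c)" by (simp add: dd_def)
      have "norm (aa T t - c) \<le> norm (dd aa T t) + norm (mm aa T - c)"
        unfolding eq by (rule norm_triangle_ineq)
      also have "\<dots> \<le> (1/100) * exp (- (T/2)) + (6/10000) * exp (- (T/2))"
        using bnd_dd[OF T t] c(2)[OF T] by (rule add_mono)
      also have "\<dots> \<le> (2/100) * exp (- (T/2))" by simp
      finally show ?thesis .
    qed
    define Uc where "Uc t = exp (t *\<^sub>R (- c))" for t :: real
    have Uc: "is_trans (\<lambda>t. c) Uc" unfolding Uc_def[abs_def] by (rule trans_const)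
    have Ucb: "norm (Uc t) \<le> 2" if "t \<in> {0..1}" for t
    proof -
      have "\<bar>t\<bar> * norm c \<le> 1 * (1/200)"
        using that c(1) by (intro mult_mono) auto
      then have "norm (t *\<^sub>R (- c)) \<le> 1 * (1/200)" by simp
      then show ?thesis unfolding Uc_def by (intro exp_bound_half) simp
    qed
    have P0: "pexp_neg (\<lambda>t. \<epsilon> *\<^sub>R a t) = Uf 0 1"
    proof (rule pexp_eq)
      show "norm (\<epsilon> *\<^sub>R a t) \<le> 1/2" if "t \<in> {0..1}" for t using ea[OF that] by simp
      show "is_trans (\<lambda>t. \<epsilon> *\<^sub>R a t) (Uf 0)"
        using Uf_trans[of 0] init unfolding is_trans_def by simp
    qed
    have bound: "norm (pexp_neg (\<lambda>t. \<epsilon> *\<^sub>R a t) - exp (- c)) \<le> 8/3 * ((2/100) * exp (- (T/2)))"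
      if T: "T \<ge> 0" for T
    proof -
      have "norm (Uf T 1 - Uc 1) \<le> 8/3 * ((2/100) * exp (- (T/2)))"
        by (rule trans_compare[OF _ Uf_trans[OF T] Uc]) (use bnd_aa4[OF T] close[OF T] Ucb in auto)
      then show ?thesis using cons[OF T] P0 by (simp add: Uc_def)
    qed
    have lim0: "((\<lambda>T::real. 8/3 * ((2/100) * exp (- (T/2)))) \<longlongrightarrow> 0) at_top" by real_asymp
    have "norm (pexp_neg (\<lambda>t. \<epsilon> *\<^sub>R a t) - exp (- c)) \<le> 0"
      by (rule tendsto_le[OF trivial_limit_at_top_linorder lim0 tendsto_const])
         (use bound in \<open>auto simp: eventually_at_top_linorder\<close>)
    then have Pc: "pexp_neg (\<lambda>t. \<epsilon> *\<^sub>R a t) = exp (- c)" by simp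
    have "alg_log (exp (- c)) = - c" by (rule log_exp) (use c(1) in simp)
    then have goal: "- alg_log (pexp_neg (\<lambda>t. \<epsilon> *\<^sub>R a t)) = c" using Pc by simp
    have lim1: "((\<lambda>T::real. (6/10000) * exp (- (T/2))) \<longlongrightarrow> 0) at_top" by real_asymp
    have "((\<lambda>T. mm aa T - c) \<longlongrightarrow> 0) at_top"
      by (rule Lim_null_comparison[OF _ lim1]) (use c(2) in \<open>auto simp: eventually_at_top_linorder\<close>)
    then have "(mm aa \<longlongrightarrow> c) at_top" by (rule LIM_zero_cancel)
    then show "((\<lambda>T. integral {0..1} (aa T)) \<longlongrightarrow> - alg_log (pexp_neg (\<lambda>t. \<epsilon> *\<^sub>R a t))) at_top"
      unfolding goal by (simp add: mm_def[abs_def])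
  qed
qed

end
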